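(* Let $\delta\ge 0$ be a real number and let $g,u,c:\mathbb{R}\to[0,\infty)$ be continuous functions. Consider the model $$R_t=\sigma_t\varepsilon_t,\qquad \sigma_t^{\delta}=g(\varepsilon_{t-1})+u(x_{t-1})+c(\varepsilon_{t-1})\sigma_{t-1}^{\delta},$$ where $\{\varepsilon_t\}_t$ is an i.i.d. sequence with mean $0$ and variance $1$, $\{x_t\}_t$ is a strictly stationary ergodic process independent of $\{\varepsilon_t\}_t$, and the joint process $\{(\varepsilon_t,x_t)\}_t$ is adapted to a filtration $\{\mathcal{F}_t\}_t$. Suppose that for some $\alpha\in(0,1]$, $$E|\varepsilon_t|^{\delta\alpha}<\infty,\quad E\big(u(x_t)\big)^{\alpha}<\infty,\quad E\big(c(\varepsilon_t)\big)^{\alpha}<1,\quad E\big(g(\varepsilon_t)\big)^{\alpha}<\infty .$$ Then the model admits a unique stationary solution of order $\alpha\delta$. Furthermore this solution is strictly stationary and ergodic and admits the causal representation $$R_t=\sigma_t\varepsilon_t,\qquad \sigma_t^{\delta}=g(\varepsilon_{t-1})+u(x_{t-1})+\sum_{k=1}^{\infty}\Big(\prod_{j=0}^{k-1}c(\varepsilon_{t-1-j})\Big)\big[g(\varepsilon_{t-1-k})+u(x_{t-1-k})\big].$$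
   Context: A stationary solution of order $\alpha\delta$ means a stationary solution $\{R_t\}_t$ of the model with $E|R_t|^{\alpha\delta}<\infty$. The process $\{x_t\}_t$ is an exogenous process; the functions $g,u,c$ are assumed chosen so that $P(\sigma_t>0)=1$ for every $t$. *)

theory Defs
  imports "HOL-Probability.Probability"
begin

definition path :: "(int \<Rightarrow> 'a \<Rightarrow> 'b) \<Rightarrow> 'a \<Rightarrow> (int \<Rightarrow> 'b)" where
  "path X = (\<lambda>\<omega> t. X t \<omega>)"

definition strictly_stationary ::
  "'a measure \<Rightarrow> 'b measure \<Rightarrow> (int \<Rightarrow> 'a \<Rightarrow> 'b) \<Rightarrow> bool" where
  "strictly_stationary M N X \<longleftrightarrow>
     (\<forall>t. X t \<in> measurable M N) \<and>
     (\<forall>h::int. distr M (PiM UNIV (\<lambda>_. N)) (path (\<lambda>t. X (t + h)))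
             = distr M (PiM UNIV (\<lambda>_. N)) (path X))"

definition ergodic_process ::
  "'a measure \<Rightarrow> 'b measure \<Rightarrow> (int \<Rightarrow> 'a \<Rightarrow> 'b) \<Rightarrow> bool" where
  "ergodic_process M N X \<longleftrightarrow>
     strictly_stationary M N X \<and>
     (\<forall>A \<in> sets (PiM UNIV (\<lambda>_. N)).
        (\<lambda>f t. f (t + 1)) -` A \<inter> space (PiM UNIV (\<lambda>_. N)) = A \<longrightarrow>
        measure M (path X -` A \<inter> space M) \<in> {0, 1})"

definition model_solution ::
  "'a measure \<Rightarrow> real \<Rightarrow> (real \<Rightarrow> real) \<Rightarrow> (real \<Rightarrow> real) \<Rightarrow> (real \<Rightarrow> real)
   \<Rightarrow> (int \<Rightarrow> 'a \<Rightarrow> real) \<Rightarrow> (int \<Rightarrow> 'a \<Rightarrow> real)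
   \<Rightarrow> (int \<Rightarrow> 'a \<Rightarrow> real) \<Rightarrow> (int \<Rightarrow> 'a \<Rightarrow> real) \<Rightarrow> bool" where
  "model_solution M \<delta> g u c eps x R \<sigma> \<longleftrightarrow>
     (\<forall>t. R t \<in> borel_measurable M \<and> \<sigma> t \<in> borel_measurable M) \<and>
     (\<forall>t. AE \<omega> in M.
        \<sigma> t \<omega> \<ge> 0 \<and>
        R t \<omega> = \<sigma> t \<omega> * eps t \<omega> \<and>
        \<sigma> t \<omega> powr \<delta> = g (eps (t - 1) \<omega>) + u (x (t - 1) \<omega>)
                           + c (eps (t - 1) \<omega>) * \<sigma> (t - 1) \<omega> powr \<delta>)"

definition stationary_solution_of_order ::
  "'a measure \<Rightarrow> real \<Rightarrow> real \<Rightarrow> (real \<Rightarrow> real) \<Rightarrow> (real \<Rightarrow> real) \<Rightarrow> (real \<Rightarrow> real)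
   \<Rightarrow> (int \<Rightarrow> 'a \<Rightarrow> real) \<Rightarrow> (int \<Rightarrow> 'a \<Rightarrow> real)
   \<Rightarrow> (int \<Rightarrow> 'a \<Rightarrow> real) \<Rightarrow> (int \<Rightarrow> 'a \<Rightarrow> real) \<Rightarrow> bool" where
  "stationary_solution_of_order M p \<delta> g u c eps x R \<sigma> \<longleftrightarrow>
     model_solution M \<delta> g u c eps x R \<sigma> \<and>
     strictly_stationary M borel (\<lambda>t \<omega>. (R t \<omega>, \<sigma> t \<omega>)) \<and>
     (\<forall>t. integrable M (\<lambda>\<omega>. \<bar>R t \<omega>\<bar> powr p))"

definition causal_term ::
  "(real \<Rightarrow> real) \<Rightarrow> (real \<Rightarrow> real) \<Rightarrow> (real \<Rightarrow> real)
   \<Rightarrow> (int \<Rightarrow> 'a \<Rightarrow> real) \<Rightarrow> (int \<Rightarrow> 'a \<Rightarrow> real) \<Rightarrow> int \<Rightarrow> nat \<Rightarrow> 'a \<Rightarrow> real" where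
  "causal_term g u c eps x t k \<omega> =
     (\<Prod>j<k. c (eps (t - 1 - int j) \<omega>)) *
     (g (eps (t - 1 - int k) \<omega>) + u (x (t - 1 - int k) \<omega>))"

end

theory Submission
  imports Defs
begin

abbreviation EE :: "(int \<Rightarrow> real) measure" where
  "EE \<equiv> PiM UNIV (\<lambda>_. borel)"

definition shf :: "int \<Rightarrow> (int \<Rightarrow> 'b) \<Rightarrow> (int \<Rightarrow> 'b)" where
  "shf h f = (\<lambda>t. f (t + h))"

lemma space_EE[simp]: "space EE = UNIV"
  by (simp add: space_PiM PiE_def extensional_def)

lemma shf_meas[measurable]: "shf h \<in> measurable (PiM UNIV (\<lambda>_. N)) (PiM UNIV (\<lambda>_. N))"
  unfolding shf_def by (rule measurable_PiM_single') (auto simp: space_PiM)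

lemma path_meas:
  assumes "\<And>t. X t \<in> measurable M N"
  shows "path X \<in> measurable M (PiM UNIV (\<lambda>_. N))"
  unfolding path_def using assms measurable_space[OF assms]
  by (intro measurable_PiM_single') (auto simp: space_PiM)

lemma snd_comp_meas[measurable]: "(\<lambda>p. snd p s) \<in> borel_measurable (N \<Otimes>\<^sub>M EE)"
  by (rule measurable_compose[OF measurable_snd]) (rule measurable_component_singleton, simp)

lemma fst_comp_meas[measurable]: "(\<lambda>p. fst p s) \<in> borel_measurable (EE \<Otimes>\<^sub>M N)"
  by (rule measurable_compose[OF measurable_fst]) (rule measurable_component_singleton, simp)

lemma pred_summable[measurable (raw)]:
  fixes f :: "nat \<Rightarrow> 'a \<Rightarrow> real"
  assumes [measurable]: "\<And>i. f i \<in> borel_measurable M"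
  shows "Measurable.pred M (\<lambda>x. summable (\<lambda>i. f i x))"
proof -
  have "{x\<in>space M. Cauchy (\<lambda>n. \<Sum>i<n. f i x)} \<in> sets M" by measurable
  then show ?thesis by (simp add: pred_def summable_iff_convergent Cauchy_convergent_iff)
qed

lemma test: "(\<lambda>p::(int\<Rightarrow>real)\<times>(int\<Rightarrow>real). summable (\<lambda>k. snd p (int k))) \<in> measurable (EE \<Otimes>\<^sub>M EE) (count_space UNIV)"
  by measurable

definition ctp :: "(real \<Rightarrow> real) \<Rightarrow> (real \<Rightarrow> real) \<Rightarrow> (real \<Rightarrow> real) \<Rightarrow> (int \<Rightarrow> real) \<Rightarrow> (int \<Rightarrow> real) \<Rightarrow> int \<Rightarrow> nat \<Rightarrow> real" where
  "ctp g u c f y t k = (\<Prod>j<k. c (f (t - 1 - int j))) * (g (f (t - 1 - int k)) + u (y (t - 1 - int k)))"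

definition Vp where
  "Vp g u c f y t = g (f (t - 1)) + u (y (t - 1)) + (\<Sum>k. ctp g u c f y t (Suc k))"

definition sig :: "real \<Rightarrow> (real \<Rightarrow> real) \<Rightarrow> (real \<Rightarrow> real) \<Rightarrow> (real \<Rightarrow> real) \<Rightarrow> (int \<Rightarrow> real) \<Rightarrow> (int \<Rightarrow> real) \<Rightarrow> int \<Rightarrow> real" where
  "sig \<delta> g u c f y t = (if summable (\<lambda>k. ctp g u c f y t (Suc k)) then Vp g u c f y t powr (1/\<delta>) else 0)"

lemma causal_term_eq: "causal_term g u c eps x t k \<omega> = ctp g u c (path eps \<omega>) (path x \<omega>) t k"
  by (simp add: causal_term_def ctp_def path_def)

lemma ctp_shift: "ctp g u c (shf h f) (shf h y) t k = ctp g u c f y (t + h) k"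
  by (simp add: ctp_def shf_def algebra_simps)

lemma Vp_shift: "Vp g u c (shf h f) (shf h y) t = Vp g u c f y (t + h)"
  by (simp add: Vp_def ctp_shift) (simp add: shf_def algebra_simps)

lemma sig_shift: "sig d g u c (shf h f) (shf h y) t = sig d g u c f y (t + h)"
  by (simp add: sig_def ctp_shift Vp_shift)

lemma ctp_nonneg:
  assumes "\<forall>y. g y \<ge> 0" "\<forall>y. u y \<ge> 0" "\<forall>y. c y \<ge> 0"
  shows "ctp g u c f y t k \<ge> 0"
  using assms unfolding ctp_def by (intro mult_nonneg_nonneg prod_nonneg add_nonneg_nonneg) auto

lemma ctp_0: "ctp g u c f y t 0 = g (f (t - 1)) + u (y (t - 1))"
  by (simp add: ctp_def)

lemma ctp_Suc: "ctp g u c f y t (Suc k) = c (f (t - 1)) * ctp g u c f y (t - 1) k"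
  unfolding ctp_def prod.lessThan_Suc_shift
  by (simp add: algebra_simps)

lemma Vp_rec:
  assumes "summable (\<lambda>k. ctp g u c f y (t - 1) (Suc k))"
  shows "summable (\<lambda>k. ctp g u c f y t (Suc k))"
    and "Vp g u c f y t = g (f (t - 1)) + u (y (t - 1)) + c (f (t - 1)) * Vp g u c f y (t - 1)"
proof -
  have s: "summable (\<lambda>k. ctp g u c f y (t - 1) k)"
    using assms summable_Suc_iff by blast
  show "summable (\<lambda>k. ctp g u c f y t (Suc k))"
    unfolding ctp_Suc by (rule summable_mult[OF s])
  have "(\<Sum>k. ctp g u c f y t (Suc k)) = c (f (t - 1)) * (\<Sum>k. ctp g u c f y (t - 1) k)"
    unfolding ctp_Suc by (rule suminf_mult[OF s])
  also have "(\<Sum>k. ctp g u c f y (t - 1) k) = ctp g u c f y (t - 1) 0 + (\<Sum>k. ctp g u c f y (t - 1) (Suc k))"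
    using suminf_split_head[OF s] by simp
  finally show "Vp g u c f y t = g (f (t - 1)) + u (y (t - 1)) + c (f (t - 1)) * Vp g u c f y (t - 1)"
    unfolding Vp_def ctp_0 by (simp add: algebra_simps)
qed

context
  fixes g u c :: "real \<Rightarrow> real"
  assumes gm[measurable]: "g \<in> borel_measurable borel"
    and um[measurable]: "u \<in> borel_measurable borel"
    and cm[measurable]: "c \<in> borel_measurable borel"
begin

lemma ctp_meas[measurable]: "(\<lambda>p. ctp g u c (snd p) (fst p) t k) \<in> borel_measurable (EE \<Otimes>\<^sub>M EE)"
  unfolding ctp_def by measurable

lemma Vp_meas[measurable]: "(\<lambda>p. Vp g u c (snd p) (fst p) t) \<in> borel_measurable (EE \<Otimes>\<^sub>M EE)"
  unfolding Vp_def by measurable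

lemma sig_meas[measurable]: "(\<lambda>p. sig d g u c (snd p) (fst p) t) \<in> borel_measurable (EE \<Otimes>\<^sub>M EE)"
  unfolding sig_def by measurable

end

lemma (in prob_space) iid_path_emeasure:
  assumes ind: "indep_vars (\<lambda>_. borel) X UNIV" and rv: "\<And>t. X t \<in> borel_measurable M"
    and ident: "\<And>t. distr M borel (X t) = distr M borel (X 0)"
    and J: "finite J" and A: "\<And>j. j \<in> J \<Longrightarrow> A j \<in> sets borel"
  shows "emeasure (distr M EE (path (\<lambda>t. X (t + h)))) (prod_emb UNIV (\<lambda>_. borel) J (Pi\<^sub>E J A))
       = ennreal (\<Prod>j\<in>J. measure (distr M borel (X 0)) (A j))"
proof -
  have pm: "path (\<lambda>t. X (t + h)) \<in> measurable M EE"
    by (rule path_meas) (simp add: rv)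
  have S: "prod_emb UNIV (\<lambda>_. borel) J (Pi\<^sub>E J A) \<in> sets EE"
    using J A by (intro sets_PiM_I) auto
  have pre: "path (\<lambda>t. X (t + h)) -` prod_emb UNIV (\<lambda>_. borel) J (Pi\<^sub>E J A) \<inter> space M
      = {\<omega>\<in>space M. \<forall>j\<in>J. X (j + h) \<omega> \<in> A j}"
    by (auto simp: prod_emb_iff path_def PiE_iff extensional_def)
  have mX: "\<And>t B. B \<in> sets borel \<Longrightarrow> prob (X t -` B \<inter> space M) = measure (distr M borel (X 0)) B"
    using ident rv by (metis measure_distr sets_borel)
  show ?thesis
  proof (cases "J = {}")
    case True
    then have "{\<omega>\<in>space M. \<forall>j\<in>J. X (j + h) \<omega> \<in> A j} = space M" by auto
    then show ?thesis using emeasure_distr[OF pm S] pre True by (simp add: emeasure_space_1)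
  next
    case False
    have eqs: "{\<omega>\<in>space M. \<forall>j\<in>J. X (j + h) \<omega> \<in> A j} = (\<Inter>i\<in>(\<lambda>j. j + h) ` J. X i -` A (i - h) \<inter> space M)"
      using False by auto
    have inj: "inj_on (\<lambda>j. j + h) J" by (auto simp: inj_on_def)
    have "prob (\<Inter>i\<in>(\<lambda>j. j + h) ` J. X i -` A (i - h) \<inter> space M)
        = (\<Prod>i\<in>(\<lambda>j. j + h) ` J. prob (X i -` A (i - h) \<inter> space M))"
      using False J A by (intro indep_varsD[OF ind]) auto
    also have "\<dots> = (\<Prod>j\<in>J. prob (X (j + h) -` A j \<inter> space M))"
      by (subst prod.reindex[OF inj]) simp
    also have "\<dots> = (\<Prod>j\<in>J. measure (distr M borel (X 0)) (A j))"
      using A mX by (intro prod.cong) auto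
    finally have "prob {\<omega>\<in>space M. \<forall>j\<in>J. X (j + h) \<omega> \<in> A j} = (\<Prod>j\<in>J. measure (distr M borel (X 0)) (A j))"
      using eqs by simp
    then show ?thesis
      using emeasure_distr[OF pm S] pre by (simp add: emeasure_eq_measure)
  qed
qed

lemma (in prob_space) iid_path_shift:
  assumes ind: "indep_vars (\<lambda>_. borel) X UNIV" and rv: "\<And>t. X t \<in> borel_measurable M"
    and ident: "\<And>t. distr M borel (X t) = distr M borel (X 0)"
  shows "distr M EE (path (\<lambda>t. X (t + h))) = distr M EE (path X)"
proof (rule measure_eqI_PiM_infinite)
  show "sets (distr M EE (path (\<lambda>t. X (t + h)))) = sets EE" by simp
  show "sets (distr M EE (path X)) = sets EE" by simp
  show "finite_measure (distr M EE (path (\<lambda>t. X (t + h))))"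
  proof -
    have "prob_space (distr M EE (path (\<lambda>t. X (t + h))))"
      by (intro prob_space_distr path_meas) (simp add: rv)
    then show ?thesis by (simp add: prob_space_def)
  qed
  fix A :: "int \<Rightarrow> real set" and J :: "int set" assume "finite J" "J \<subseteq> UNIV" "\<And>i. i \<in> J \<Longrightarrow> A i \<in> sets borel"
  then show "emeasure (distr M EE (path (\<lambda>t. X (t + h)))) (prod_emb UNIV (\<lambda>_. borel) J (Pi\<^sub>E J A))
      = emeasure (distr M EE (path X)) (prod_emb UNIV (\<lambda>_. borel) J (Pi\<^sub>E J A))"
    using iid_path_emeasure[OF ind rv ident, of J A h] iid_path_emeasure[OF ind rv ident, of J A 0]
    by simp
qed

locale setting = prob_space M for M :: "'a measure" +
  fixes \<delta> \<alpha> :: real and g u c :: "real \<Rightarrow> real" and eps x :: "int \<Rightarrow> 'a \<Rightarrow> real"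
  assumes delta_pos: "\<delta> > 0"
    and g_cont: "continuous_on UNIV g" and g_nonneg: "\<forall>y. g y \<ge> 0"
    and u_cont: "continuous_on UNIV u" and u_nonneg: "\<forall>y. u y \<ge> 0"
    and c_cont: "continuous_on UNIV c" and c_nonneg: "\<forall>y. c y \<ge> 0"
    and eps_meas: "\<forall>t. eps t \<in> borel_measurable M"
    and eps_indep: "indep_vars (\<lambda>_. borel) eps UNIV"
    and eps_ident: "\<forall>t. distr M borel (eps t) = distr M borel (eps 0)"
    and x_erg: "ergodic_process M borel x"
    and x_eps_indep: "indep_var (PiM UNIV (\<lambda>_. borel)) (path x) (PiM UNIV (\<lambda>_. borel)) (path eps)"
    and alpha: "0 < \<alpha>" "\<alpha> \<le> 1"
    and mom_eps: "\<forall>t. integrable M (\<lambda>\<omega>. \<bar>eps t \<omega>\<bar> powr (\<delta> * \<alpha>))"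
    and mom_u: "\<forall>t. integrable M (\<lambda>\<omega>. u (x t \<omega>) powr \<alpha>)"
    and mom_c: "\<forall>t. integrable M (\<lambda>\<omega>. c (eps t \<omega>) powr \<alpha>) \<and>
                    integral\<^sup>L M (\<lambda>\<omega>. c (eps t \<omega>) powr \<alpha>) < 1"
    and mom_g: "\<forall>t. integrable M (\<lambda>\<omega>. g (eps t \<omega>) powr \<alpha>)"
begin

lemma gm[measurable]: "g \<in> borel_measurable borel" using g_cont by (rule borel_measurable_continuous_onI)
lemma um[measurable]: "u \<in> borel_measurable borel" using u_cont by (rule borel_measurable_continuous_onI)
lemma cm[measurable]: "c \<in> borel_measurable borel" using c_cont by (rule borel_measurable_continuous_onI)
lemma em[measurable]: "eps t \<in> borel_measurable M" using eps_meas by auto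
lemma x_stat: "strictly_stationary M borel x" using x_erg by (simp add: ergodic_process_def)
lemma xm[measurable]: "x t \<in> borel_measurable M" using x_stat by (simp add: strictly_stationary_def)

lemma pxm[measurable]: "path x \<in> measurable M EE" by (rule path_meas) simp
lemma pem[measurable]: "path eps \<in> measurable M EE" by (rule path_meas) simp

definition "lawx = distr M EE (path x)"
definition "lawe = distr M EE (path eps)"
definition "mu = distr M (EE \<Otimes>\<^sub>M EE) (\<lambda>\<omega>. (path x \<omega>, path eps \<omega>))"

definition Tsh :: "int \<Rightarrow> (int \<Rightarrow> real) \<times> (int \<Rightarrow> real) \<Rightarrow> (int \<Rightarrow> real) \<times> (int \<Rightarrow> real)" where
  "Tsh h p = (shf h (fst p), shf h (snd p))"

lemma Tsh_meas[measurable]: "Tsh h \<in> measurable (EE \<Otimes>\<^sub>M EE) (EE \<Otimes>\<^sub>M EE)"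
  unfolding Tsh_def by measurable

lemma path_shift: "path (\<lambda>s. X (s + h)) = (\<lambda>\<omega>. shf h (path X \<omega>))"
  by (simp add: path_def shf_def fun_eq_iff)

lemma prob_lawx: "prob_space lawx" unfolding lawx_def by (rule prob_space_distr) simp
lemma prob_lawe: "prob_space lawe" unfolding lawe_def by (rule prob_space_distr) simp
lemma prob_mu: "prob_space mu" unfolding mu_def by (rule prob_space_distr) simp
lemma sets_lawx[simp, measurable_cong]: "sets lawx = sets EE" by (simp add: lawx_def)
lemma sets_lawe[simp, measurable_cong]: "sets lawe = sets EE" by (simp add: lawe_def)
lemma sets_mu[simp, measurable_cong]: "sets mu = sets (EE \<Otimes>\<^sub>M EE)" by (simp add: mu_def)
lemma space_lawx[simp]: "space lawx = UNIV" by (simp add: lawx_def)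
lemma space_lawe[simp]: "space lawe = UNIV" by (simp add: lawe_def)
lemma space_mu[simp]: "space mu = UNIV" by (simp add: mu_def space_pair_measure)

lemma mu_eq: "mu = lawx \<Otimes>\<^sub>M lawe"
  using x_eps_indep unfolding indep_var_distribution_eq mu_def lawx_def lawe_def by simp

lemma x_shift_law: "distr M EE (path (\<lambda>s. x (s + h))) = lawx"
  using x_stat unfolding strictly_stationary_def lawx_def by simp

lemma e_shift_law: "distr M EE (path (\<lambda>s. eps (s + h))) = lawe"
  unfolding lawe_def using eps_indep eps_ident by (intro iid_path_shift) auto

lemma lawx_inv: "distr lawx EE (shf h) = lawx"
proof -
  have "distr lawx EE (shf h) = distr M EE (shf h \<circ> path x)"
    unfolding lawx_def by (rule distr_distr) measurable
  also have "shf h \<circ> path x = path (\<lambda>s. x (s + h))" by (simp add: path_shift o_def)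
  finally show ?thesis using x_shift_law by simp
qed

lemma lawe_inv: "distr lawe EE (shf h) = lawe"
proof -
  have "distr lawe EE (shf h) = distr M EE (shf h \<circ> path eps)"
    unfolding lawe_def by (rule distr_distr) measurable
  also have "shf h \<circ> path eps = path (\<lambda>s. eps (s + h))" by (simp add: path_shift o_def)
  finally show ?thesis using e_shift_law by simp
qed

lemma mu_inv: "distr mu (EE \<Otimes>\<^sub>M EE) (Tsh h) = mu"
proof -
  have sf: "sigma_finite_measure (distr lawe EE (shf h))"
    unfolding lawe_inv using prob_lawe by (rule prob_space_imp_sigma_finite)
  have T: "(\<lambda>(a, b). (shf h a, shf h b)) = Tsh h" by (auto simp: Tsh_def fun_eq_iff)
  have m1: "shf h \<in> measurable lawx EE" using measurable_cong_sets[OF sets_lawx refl] by simp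
  have m2: "shf h \<in> measurable lawe EE" using measurable_cong_sets[OF sets_lawe refl] by simp
  have A0: "distr lawx EE (shf h) \<Otimes>\<^sub>M distr lawe EE (shf h) = distr (lawx \<Otimes>\<^sub>M lawe) (EE \<Otimes>\<^sub>M EE) (\<lambda>(a, b). (shf h a, shf h b))"
    by (rule pair_measure_distr[OF m1 m2 sf])
  have A: "distr lawx EE (shf h) \<Otimes>\<^sub>M distr lawe EE (shf h) = distr (lawx \<Otimes>\<^sub>M lawe) (EE \<Otimes>\<^sub>M EE) (Tsh h)"
    using A0 by (simp only: T)
  have B: "lawx \<Otimes>\<^sub>M lawe = distr (lawx \<Otimes>\<^sub>M lawe) (EE \<Otimes>\<^sub>M EE) (Tsh h)"
    using A by (simp only: lawx_inv lawe_inv)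
  show ?thesis using B by (simp only: mu_eq)
qed
lemma mu_Tsh_comp: "distr M (EE \<Otimes>\<^sub>M EE) (\<lambda>\<omega>. Tsh h (path x \<omega>, path eps \<omega>)) = mu"
proof -
  have "distr M (EE \<Otimes>\<^sub>M EE) (Tsh h \<circ> (\<lambda>\<omega>. (path x \<omega>, path eps \<omega>))) = distr mu (EE \<Otimes>\<^sub>M EE) (Tsh h)"
    unfolding mu_def by (rule distr_distr[symmetric]) measurable
  then show ?thesis using mu_inv by (simp add: o_def)
qed

end

abbreviation OUT :: "(int \<Rightarrow> real \<times> real) measure" where
  "OUT \<equiv> PiM UNIV (\<lambda>_. borel)"

context setting begin

lemmas sigm[measurable] = sig_meas[OF gm um cm]
lemmas ctpm[measurable] = ctp_meas[OF gm um cm]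
lemmas Vpm[measurable] = Vp_meas[OF gm um cm]

definition "sg t \<omega> = sig \<delta> g u c (path eps \<omega>) (path x \<omega>) t"
definition "RR t \<omega> = sg t \<omega> * eps t \<omega>"
definition Phi :: "(int \<Rightarrow> real) \<times> (int \<Rightarrow> real) \<Rightarrow> int \<Rightarrow> real \<times> real" where
  "Phi p = (\<lambda>t. (sig \<delta> g u c (snd p) (fst p) t * snd p t, sig \<delta> g u c (snd p) (fst p) t))"

lemma Phi_meas[measurable]: "Phi \<in> measurable (EE \<Otimes>\<^sub>M EE) OUT"
  unfolding Phi_def by (rule measurable_PiM_single') (auto simp: space_PiM)

lemma path_RS: "path (\<lambda>t \<omega>. (RR t \<omega>, sg t \<omega>)) = (\<lambda>\<omega>. Phi (path x \<omega>, path eps \<omega>))"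
  by (simp add: fun_eq_iff path_def Phi_def RR_def sg_def)

lemma Phi_shift: "Phi (Tsh h p) = shf h (Phi p)"
  by (simp add: fun_eq_iff Phi_def Tsh_def sig_shift) (simp add: shf_def)

lemma sgm[measurable]: "sg t \<in> borel_measurable M"
proof -
  have "(\<lambda>\<omega>. sig \<delta> g u c (snd (path x \<omega>, path eps \<omega>)) (fst (path x \<omega>, path eps \<omega>)) t) \<in> borel_measurable M"
    by measurable
  then show ?thesis by (simp add: sg_def[abs_def])
qed

lemma RRm[measurable]: "RR t \<in> borel_measurable M"
  unfolding RR_def by measurable

lemma RS_law_shift: "distr M OUT (path (\<lambda>t \<omega>. (RR (t + h) \<omega>, sg (t + h) \<omega>))) = distr mu OUT Phi"
proof -
  have "path (\<lambda>t \<omega>. (RR (t + h) \<omega>, sg (t + h) \<omega>)) = (\<lambda>\<omega>. shf h (Phi (path x \<omega>, path eps \<omega>)))"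
    using path_shift[of "\<lambda>t \<omega>. (RR t \<omega>, sg t \<omega>)" h] path_RS by simp
  also have "\<dots> = Phi \<circ> (\<lambda>\<omega>. Tsh h (path x \<omega>, path eps \<omega>))"
    by (simp add: Phi_shift o_def)
  finally have "distr M OUT (path (\<lambda>t \<omega>. (RR (t + h) \<omega>, sg (t + h) \<omega>)))
      = distr M OUT (Phi \<circ> (\<lambda>\<omega>. Tsh h (path x \<omega>, path eps \<omega>)))" by simp
  also have "\<dots> = distr (distr M (EE \<Otimes>\<^sub>M EE) (\<lambda>\<omega>. Tsh h (path x \<omega>, path eps \<omega>))) OUT Phi"
    by (rule distr_distr[symmetric]) measurable
  finally show ?thesis using mu_Tsh_comp by simp
qed

lemma RS_stationary: "strictly_stationary M borel (\<lambda>t \<omega>. (RR t \<omega>, sg t \<omega>))"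
  unfolding strictly_stationary_def
proof safe
  fix t show "(\<lambda>\<omega>. (RR t \<omega>, sg t \<omega>)) \<in> borel_measurable M" by measurable
next
  fix h :: int
  show "distr M OUT (path (\<lambda>t. \<lambda>\<omega>. (RR (t + h) \<omega>, sg (t + h) \<omega>))) = distr M OUT (path (\<lambda>t \<omega>. (RR t \<omega>, sg t \<omega>)))"
    using RS_law_shift[of h] RS_law_shift[of 0] by simp
qed

end

lemma powr_add_le:
  fixes a b al :: real
  assumes a: "0 \<le> a" and b: "0 \<le> b" and al: "0 < al" "al \<le> 1"
  shows "(a + b) powr al \<le> a powr al + b powr al"
proof (cases "a + b = 0")
  case True then have "a = 0" "b = 0" using a b by auto
  then show ?thesis by simp
next
  case False
  then have s: "a + b > 0" using a b by auto
  have r1: "a / (a + b) \<le> (a / (a + b)) powr al"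
    using powr_mono'[of al 1 "a / (a + b)"] a b s al by (simp add: divide_le_eq_1)
  have r2: "b / (a + b) \<le> (b / (a + b)) powr al"
    using powr_mono'[of al 1 "b / (a + b)"] a b s al by (simp add: divide_le_eq_1)
  have "1 = a / (a + b) + b / (a + b)" using s by (simp add: add_divide_distrib[symmetric])
  also have "\<dots> \<le> (a / (a + b)) powr al + (b / (a + b)) powr al" using r1 r2 by simp
  also have "\<dots> = (a powr al + b powr al) / (a + b) powr al"
    using a b s by (simp add: powr_divide add_divide_distrib)
  finally show ?thesis using s by (simp add: le_divide_eq)
qed

lemma powr_sum_le:
  fixes a :: "nat \<Rightarrow> real" and al :: real
  assumes a: "\<And>k. 0 \<le> a k" and al: "0 < al" "al \<le> 1"
  shows "(\<Sum>k<n. a k) powr al \<le> (\<Sum>k<n. a k powr al)"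
proof (induction n)
  case 0 then show ?case by simp
next
  case (Suc n)
  have "(\<Sum>k<Suc n. a k) powr al \<le> (\<Sum>k<n. a k) powr al + a n powr al"
    using powr_add_le[OF sum_nonneg[of "{..<n}" a] a[of n] al] a by simp
  then show ?case using Suc by simp
qed

lemma powr_suminf_le:
  fixes a :: "nat \<Rightarrow> real" and al :: real
  assumes a: "\<And>k. 0 \<le> a k" and al: "0 < al" "al \<le> 1" and s: "summable a"
  shows "ennreal ((\<Sum>k. a k) powr al) \<le> (\<Sum>k. ennreal (a k powr al))"
proof (cases "(\<Sum>k. ennreal (a k powr al)) = top")
  case True then show ?thesis by simp
next
  case False
  have sp: "summable (\<lambda>k. a k powr al)" by (rule summable_suminf_not_top[OF _ False]) (rule powr_ge_zero)
  have lim: "(\<lambda>n. (\<Sum>k<n. a k) powr al) \<longlonglongrightarrow> (\<Sum>k. a k) powr al"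
    using al by (intro tendsto_powr' summable_LIMSEQ[OF s] tendsto_const) (simp add: sum_nonneg a)
  have "(\<Sum>k. a k) powr al \<le> (\<Sum>k. a k powr al)"
  proof (rule LIMSEQ_le_const2[OF lim])
    show "\<exists>N. \<forall>n\<ge>N. (\<Sum>k<n. a k) powr al \<le> (\<Sum>k. a k powr al)"
    proof (intro exI allI impI)
      fix n :: nat
      have "(\<Sum>k<n. a k powr al) \<le> (\<Sum>k. a k powr al)"
        by (rule sum_le_suminf[OF sp]) auto
      then show "(\<Sum>k<n. a k) powr al \<le> (\<Sum>k. a k powr al)"
        using powr_sum_le[where a=a and al=al and n=n, OF a al] by linarith
    qed
  qed
  moreover have "(\<Sum>k. ennreal (a k powr al)) = ennreal (\<Sum>k. a k powr al)"
    by (rule suminf_ennreal[OF _ False]) (rule powr_ge_zero)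
  ultimately show ?thesis by (simp only: ennreal_leI)
qed

lemma summable_of_powr:
  fixes a :: "nat \<Rightarrow> real" and al :: real
  assumes a: "\<And>k. 0 \<le> a k" and al: "0 < al" "al \<le> 1" and s: "summable (\<lambda>k. a k powr al)"
  shows "summable a"
proof (rule summable_comparison_test_ev[OF _ s])
  have "eventually (\<lambda>k. a k powr al < 1) sequentially"
    using summable_LIMSEQ_zero[OF s] by (rule order_tendstoD) simp
  then show "eventually (\<lambda>k. norm (a k) \<le> a k powr al) sequentially"
  proof (rule eventually_mono)
    fix k assume "a k powr al < 1"
    then have "a k \<le> 1" using a al
      by (metis ge_one_powr_ge_zero less_eq_real_def not_le)
    then show "norm (a k) \<le> a k powr al"
      using powr_mono'[of al 1 "a k"] a al by simp
  qed
qed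

lemma (in prob_space) indep_var_nn_integral:
  assumes ind: "indep_var borel X borel Y" and X: "\<And>\<omega>. 0 \<le> X \<omega>" and Y: "\<And>\<omega>. 0 \<le> Y \<omega>"
  shows "(\<integral>\<^sup>+\<omega>. ennreal (X \<omega> * Y \<omega>) \<partial>M) = (\<integral>\<^sup>+\<omega>. ennreal (X \<omega>) \<partial>M) * (\<integral>\<^sup>+\<omega>. ennreal (Y \<omega>) \<partial>M)"
proof -
  have ind2: "indep_var borel (ennreal \<circ> X) borel (ennreal \<circ> Y)"
    by (rule indep_var_compose[OF ind]) measurable
  have iv: "indep_vars (\<lambda>_. borel) (case_bool (ennreal \<circ> X) (ennreal \<circ> Y)) UNIV"
    using ind2 unfolding indep_var_def
    by (rule indep_vars_cong[THEN iffD1, rotated 3]) (auto split: bool.split)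
  have "(\<integral>\<^sup>+\<omega>. (\<Prod>i\<in>UNIV. case_bool (ennreal \<circ> X) (ennreal \<circ> Y) i \<omega>) \<partial>M) = (\<Prod>i\<in>UNIV. \<integral>\<^sup>+\<omega>. case_bool (ennreal \<circ> X) (ennreal \<circ> Y) i \<omega> \<partial>M)"
    by (rule indep_vars_nn_integral[OF _ iv]) (auto split: bool.split)
  then show ?thesis by (simp add: UNIV_bool mult.commute ennreal_mult X Y o_def)
qed

context setting begin

lemma nn_eps: "f \<in> borel_measurable borel \<Longrightarrow> (\<integral>\<^sup>+\<omega>. f (eps t \<omega>) \<partial>M) = (\<integral>\<^sup>+\<omega>. f (eps 0 \<omega>) \<partial>M)"
  for f :: "real \<Rightarrow> ennreal"
proof -
  assume [measurable]: "f \<in> borel_measurable borel"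
  have "(\<integral>\<^sup>+\<omega>. f (eps t \<omega>) \<partial>M) = (\<integral>\<^sup>+v. f v \<partial>distr M borel (eps t))"
    by (rule nn_integral_distr[symmetric]) measurable
  also have "\<dots> = (\<integral>\<^sup>+v. f v \<partial>distr M borel (eps 0))" using eps_ident by metis
  also have "\<dots> = (\<integral>\<^sup>+\<omega>. f (eps 0 \<omega>) \<partial>M)"
    by (rule nn_integral_distr) measurable
  finally show ?thesis .
qed

lemma x_marg: "distr M borel (x t) = distr M borel (x 0)"
proof -
  have "distr M borel (x t) = distr M borel ((\<lambda>f. f 0) \<circ> path (\<lambda>s. x (s + t)))"
    by (simp add: o_def path_def)
  also have "\<dots> = distr (distr M EE (path (\<lambda>s. x (s + t)))) borel (\<lambda>f. f 0)"
    by (rule distr_distr[symmetric]) (auto intro!: path_meas)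
  also have "\<dots> = distr (distr M EE (path x)) borel (\<lambda>f. f 0)"
    using x_shift_law lawx_def by simp
  also have "\<dots> = distr M borel ((\<lambda>f. f 0) \<circ> path x)"
    by (rule distr_distr) (auto intro!: path_meas)
  finally show ?thesis by (simp add: o_def path_def)
qed

lemma nn_x: "f \<in> borel_measurable borel \<Longrightarrow> (\<integral>\<^sup>+\<omega>. f (x t \<omega>) \<partial>M) = (\<integral>\<^sup>+\<omega>. f (x 0 \<omega>) \<partial>M)"
  for f :: "real \<Rightarrow> ennreal"
proof -
  assume [measurable]: "f \<in> borel_measurable borel"
  have "(\<integral>\<^sup>+\<omega>. f (x t \<omega>) \<partial>M) = (\<integral>\<^sup>+v. f v \<partial>distr M borel (x t))"
    by (rule nn_integral_distr[symmetric]) measurable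
  also have "\<dots> = (\<integral>\<^sup>+v. f v \<partial>distr M borel (x 0))" using x_marg by metis
  also have "\<dots> = (\<integral>\<^sup>+\<omega>. f (x 0 \<omega>) \<partial>M)"
    by (rule nn_integral_distr) measurable
  finally show ?thesis .
qed

lemma factor:
  fixes I :: "int set" and \<phi> :: "int \<Rightarrow> real \<Rightarrow> real" and \<psi> :: "real \<Rightarrow> real"
  assumes I: "finite I" and phm[measurable]: "\<And>s. \<phi> s \<in> borel_measurable borel" and phn: "\<And>s v. 0 \<le> \<phi> s v"
    and psm[measurable]: "\<psi> \<in> borel_measurable borel" and psn: "\<And>v. 0 \<le> \<psi> v"
  shows "(\<integral>\<^sup>+\<omega>. ennreal ((\<Prod>s\<in>I. \<phi> s (eps s \<omega>)) * \<psi> (x r \<omega>)) \<partial>M)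
       = (\<Prod>s\<in>I. \<integral>\<^sup>+\<omega>. ennreal (\<phi> s (eps s \<omega>)) \<partial>M) * (\<integral>\<^sup>+\<omega>. ennreal (\<psi> (x r \<omega>)) \<partial>M)"
proof -
  have m1: "(\<lambda>f. \<Prod>s\<in>I. \<phi> s (f s)) \<in> borel_measurable EE" by measurable
  have m2: "(\<lambda>f. \<psi> (f r)) \<in> borel_measurable EE" by measurable
  have iv: "indep_var borel ((\<lambda>f. \<psi> (f r)) \<circ> path x) borel ((\<lambda>f. \<Prod>s\<in>I. \<phi> s (f s)) \<circ> path eps)"
    by (rule indep_var_compose[OF x_eps_indep m2 m1])
  have iv': "indep_var borel (\<lambda>\<omega>. \<psi> (x r \<omega>)) borel (\<lambda>\<omega>. \<Prod>s\<in>I. \<phi> s (eps s \<omega>))"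
    using iv by (simp add: o_def path_def)
  have "(\<integral>\<^sup>+\<omega>. ennreal ((\<Prod>s\<in>I. \<phi> s (eps s \<omega>)) * \<psi> (x r \<omega>)) \<partial>M)
      = (\<integral>\<^sup>+\<omega>. ennreal (\<psi> (x r \<omega>) * (\<Prod>s\<in>I. \<phi> s (eps s \<omega>))) \<partial>M)"
    by (simp add: mult.commute)
  also have "\<dots> = (\<integral>\<^sup>+\<omega>. ennreal (\<psi> (x r \<omega>)) \<partial>M) * (\<integral>\<^sup>+\<omega>. ennreal (\<Prod>s\<in>I. \<phi> s (eps s \<omega>)) \<partial>M)"
    by (rule indep_var_nn_integral[OF iv']) (auto simp: psn phn prod_nonneg)
  also have "(\<integral>\<^sup>+\<omega>. ennreal (\<Prod>s\<in>I. \<phi> s (eps s \<omega>)) \<partial>M) = (\<Prod>s\<in>I. \<integral>\<^sup>+\<omega>. ennreal (\<phi> s (eps s \<omega>)) \<partial>M)"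
  proof -
    have ivs: "indep_vars (\<lambda>_. borel) (\<lambda>s \<omega>. ennreal (\<phi> s (eps s \<omega>))) I"
      by (rule indep_vars_subset[OF indep_vars_compose2[OF eps_indep]]) auto
    have "(\<integral>\<^sup>+\<omega>. (\<Prod>s\<in>I. ennreal (\<phi> s (eps s \<omega>))) \<partial>M) = (\<Prod>s\<in>I. \<integral>\<^sup>+\<omega>. ennreal (\<phi> s (eps s \<omega>)) \<partial>M)"
      by (rule indep_vars_nn_integral[OF I ivs]) simp
    then show ?thesis by (simp add: prod_ennreal phn)
  qed
  finally show ?thesis by (simp add: mult.commute)
qed

end

context setting begin

abbreviation "ct t k \<omega> \<equiv> ctp g u c (path eps \<omega>) (path x \<omega>) t k"

definition "Cr = (\<integral>\<^sup>+\<omega>. ennreal (c (eps 0 \<omega>) powr \<alpha>) \<partial>M)"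
definition "Gr = (\<integral>\<^sup>+\<omega>. ennreal (g (eps 0 \<omega>) powr \<alpha>) \<partial>M)"
definition "Ur = (\<integral>\<^sup>+\<omega>. ennreal (u (x 0 \<omega>) powr \<alpha>) \<partial>M)"

lemma Cr_lt1: "Cr < 1"
proof -
  have "Cr = ennreal (integral\<^sup>L M (\<lambda>\<omega>. c (eps 0 \<omega>) powr \<alpha>))"
    unfolding Cr_def using mom_c by (intro nn_integral_eq_integral) auto
  then show ?thesis using mom_c ennreal_lessI[of 1 "integral\<^sup>L M (\<lambda>\<omega>. c (eps 0 \<omega>) powr \<alpha>)"] by simp
qed

lemma Gr_fin: "Gr < \<infinity>"
proof -
  have "Gr = ennreal (integral\<^sup>L M (\<lambda>\<omega>. g (eps 0 \<omega>) powr \<alpha>))"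
    unfolding Gr_def using mom_g by (intro nn_integral_eq_integral) auto
  then show ?thesis by simp
qed

lemma Ur_fin: "Ur < \<infinity>"
proof -
  have "Ur = ennreal (integral\<^sup>L M (\<lambda>\<omega>. u (x 0 \<omega>) powr \<alpha>))"
    unfolding Ur_def using mom_u by (intro nn_integral_eq_integral) auto
  then show ?thesis by simp
qed

definition "Ik t k = (\<lambda>j. t - 1 - int j) ` {..<k}"

lemma Ik_props: "finite (Ik t k)" "card (Ik t k) = k" "t \<notin> Ik t k" "t - 1 - int k \<notin> Ik t k"
proof -
  have inj: "inj_on (\<lambda>j. t - 1 - int j) {..<k}" by (auto simp: inj_on_def)
  show "finite (Ik t k)" by (simp add: Ik_def)
  show "card (Ik t k) = k" by (simp add: Ik_def card_image[OF inj])
  show "t \<notin> Ik t k" "t - 1 - int k \<notin> Ik t k" by (auto simp: Ik_def)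
qed

lemma prod_Ik: "(\<Prod>j<k. F (t - 1 - int j)) = (\<Prod>s\<in>Ik t k. F s)"
proof -
  have inj: "inj_on (\<lambda>j. t - 1 - int j) {..<k}" by (auto simp: inj_on_def)
  show ?thesis unfolding Ik_def by (simp add: prod.reindex[OF inj])
qed

lemma ct_powr: "ct t k \<omega> powr \<alpha> \<le> (\<Prod>s\<in>Ik t k. c (eps s \<omega>) powr \<alpha>) *
    (g (eps (t - 1 - int k) \<omega>) powr \<alpha> + u (x (t - 1 - int k) \<omega>) powr \<alpha>)"
proof -
  have "ct t k \<omega> powr \<alpha> = (\<Prod>j<k. c (eps (t - 1 - int j) \<omega>)) powr \<alpha> *
      (g (eps (t - 1 - int k) \<omega>) + u (x (t - 1 - int k) \<omega>)) powr \<alpha>"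
    by (simp add: ctp_def path_def powr_mult)
  also have "(\<Prod>j<k. c (eps (t - 1 - int j) \<omega>)) powr \<alpha> = (\<Prod>s\<in>Ik t k. c (eps s \<omega>) powr \<alpha>)"
    by (simp add: prod_powr_distrib prod_Ik[where F="\<lambda>s. c (eps s \<omega>) powr \<alpha>"])
  also have "(\<Prod>s\<in>Ik t k. c (eps s \<omega>) powr \<alpha>) * (g (eps (t - 1 - int k) \<omega>) + u (x (t - 1 - int k) \<omega>)) powr \<alpha>
      \<le> (\<Prod>s\<in>Ik t k. c (eps s \<omega>) powr \<alpha>) * (g (eps (t - 1 - int k) \<omega>) powr \<alpha> + u (x (t - 1 - int k) \<omega>) powr \<alpha>)"
    using g_nonneg u_nonneg alpha
    by (intro mult_left_mono powr_add_le prod_nonneg) auto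
  finally show ?thesis .
qed

lemma prodC: "(\<Prod>s\<in>Ik t k. \<integral>\<^sup>+\<omega>. ennreal (c (eps s \<omega>) powr \<alpha>) \<partial>M) = Cr ^ k"
proof -
  have "(\<Prod>s\<in>Ik t k. \<integral>\<^sup>+\<omega>. ennreal (c (eps s \<omega>) powr \<alpha>) \<partial>M) = (\<Prod>s\<in>Ik t k. Cr)"
    unfolding Cr_def by (intro prod.cong refl nn_eps) measurable
  then show ?thesis using Ik_props by simp
qed

lemma term_bound:
  fixes w :: "real \<Rightarrow> real"
  assumes wm[measurable]: "w \<in> borel_measurable borel" and wn: "\<And>v. 0 \<le> w v"
  shows "(\<integral>\<^sup>+\<omega>. ennreal (w (eps t \<omega>) * ct t k \<omega> powr \<alpha>) \<partial>M)
      \<le> (\<integral>\<^sup>+\<omega>. ennreal (w (eps 0 \<omega>)) \<partial>M) * Cr ^ k * (Gr + Ur)"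
proof -
  define r where "r = t - 1 - int k"
  define I where "I = Ik t k"
  define \<phi>1 where "\<phi>1 s v = (if s = t then w v else if s = r then g v powr \<alpha> else c v powr \<alpha>)" for s v
  define \<phi>2 where "\<phi>2 s v = (if s = t then w v else c v powr \<alpha>)" for s v
  have tI: "t \<notin> I" "r \<notin> I" "t \<noteq> r" "finite I" using Ik_props by (auto simp: I_def r_def)
  have phm1[measurable]: "\<phi>1 s \<in> borel_measurable borel" for s unfolding \<phi>1_def by measurable
  have phm2[measurable]: "\<phi>2 s \<in> borel_measurable borel" for s unfolding \<phi>2_def by measurable
  have phn1: "0 \<le> \<phi>1 s v" for s v unfolding \<phi>1_def using wn by auto
  have phn2: "0 \<le> \<phi>2 s v" for s v unfolding \<phi>2_def using wn by auto
  have P1: "(\<Prod>s\<in>insert t (insert r I). \<phi>1 s (eps s \<omega>)) = w (eps t \<omega>) * (g (eps r \<omega>) powr \<alpha> * (\<Prod>s\<in>I. c (eps s \<omega>) powr \<alpha>))" for \<omega>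
  proof -
    have "(\<Prod>s\<in>I. \<phi>1 s (eps s \<omega>)) = (\<Prod>s\<in>I. c (eps s \<omega>) powr \<alpha>)"
      using tI by (intro prod.cong) (auto simp: \<phi>1_def)
    then show ?thesis using tI by (simp add: \<phi>1_def)
  qed
  have P2: "(\<Prod>s\<in>insert t I. \<phi>2 s (eps s \<omega>)) = w (eps t \<omega>) * (\<Prod>s\<in>I. c (eps s \<omega>) powr \<alpha>)" for \<omega>
  proof -
    have "(\<Prod>s\<in>I. \<phi>2 s (eps s \<omega>)) = (\<Prod>s\<in>I. c (eps s \<omega>) powr \<alpha>)"
      using tI by (intro prod.cong) (auto simp: \<phi>2_def)
    then show ?thesis using tI by (simp add: \<phi>2_def)
  qed
  have pw: "ennreal (w (eps t \<omega>) * ct t k \<omega> powr \<alpha>) \<le>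
      ennreal ((\<Prod>s\<in>insert t (insert r I). \<phi>1 s (eps s \<omega>)) * (\<lambda>_. 1::real) (x t \<omega>)) +
      ennreal ((\<Prod>s\<in>insert t I. \<phi>2 s (eps s \<omega>)) * (\<lambda>v. u v powr \<alpha>) (x r \<omega>))" for \<omega>
  proof -
    have "w (eps t \<omega>) * ct t k \<omega> powr \<alpha> \<le> w (eps t \<omega>) * ((\<Prod>s\<in>I. c (eps s \<omega>) powr \<alpha>) *
      (g (eps r \<omega>) powr \<alpha> + u (x r \<omega>) powr \<alpha>))"
      using ct_powr[where t=t and k=k and \<omega>=\<omega>] wn unfolding I_def r_def by (intro mult_left_mono) auto
    also have "\<dots> = (\<Prod>s\<in>insert t (insert r I). \<phi>1 s (eps s \<omega>)) * 1 + (\<Prod>s\<in>insert t I. \<phi>2 s (eps s \<omega>)) * u (x r \<omega>) powr \<alpha>"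
      unfolding P1 P2 by (simp add: algebra_simps)
    finally show ?thesis
      using phn1 phn2
      by (simp add: ennreal_plus[symmetric] prod_nonneg del: ennreal_plus)
  qed
  have "(\<integral>\<^sup>+\<omega>. ennreal (w (eps t \<omega>) * ct t k \<omega> powr \<alpha>) \<partial>M) \<le>
     (\<integral>\<^sup>+\<omega>. ennreal ((\<Prod>s\<in>insert t (insert r I). \<phi>1 s (eps s \<omega>)) * (\<lambda>_. 1::real) (x t \<omega>)) +
      ennreal ((\<Prod>s\<in>insert t I. \<phi>2 s (eps s \<omega>)) * (\<lambda>v. u v powr \<alpha>) (x r \<omega>)) \<partial>M)"
    by (rule nn_integral_mono) (rule pw)
  also have "\<dots> = (\<integral>\<^sup>+\<omega>. ennreal ((\<Prod>s\<in>insert t (insert r I). \<phi>1 s (eps s \<omega>)) * (\<lambda>_. 1::real) (x t \<omega>)) \<partial>M) +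
      (\<integral>\<^sup>+\<omega>. ennreal ((\<Prod>s\<in>insert t I. \<phi>2 s (eps s \<omega>)) * (\<lambda>v. u v powr \<alpha>) (x r \<omega>)) \<partial>M)"
    by (rule nn_integral_add) measurable
  also have "(\<integral>\<^sup>+\<omega>. ennreal ((\<Prod>s\<in>insert t (insert r I). \<phi>1 s (eps s \<omega>)) * (\<lambda>_. 1::real) (x t \<omega>)) \<partial>M)
     = (\<Prod>s\<in>insert t (insert r I). \<integral>\<^sup>+\<omega>. ennreal (\<phi>1 s (eps s \<omega>)) \<partial>M) * (\<integral>\<^sup>+\<omega>. ennreal ((\<lambda>_. 1::real) (x t \<omega>)) \<partial>M)"
    using tI by (intro factor phn1) auto
  also have "(\<integral>\<^sup>+\<omega>. ennreal ((\<Prod>s\<in>insert t I. \<phi>2 s (eps s \<omega>)) * (\<lambda>v. u v powr \<alpha>) (x r \<omega>)) \<partial>M)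
     = (\<Prod>s\<in>insert t I. \<integral>\<^sup>+\<omega>. ennreal (\<phi>2 s (eps s \<omega>)) \<partial>M) * (\<integral>\<^sup>+\<omega>. ennreal ((\<lambda>v. u v powr \<alpha>) (x r \<omega>)) \<partial>M)"
    using tI by (intro factor phn2) auto
  also have "(\<Prod>s\<in>insert t (insert r I). \<integral>\<^sup>+\<omega>. ennreal (\<phi>1 s (eps s \<omega>)) \<partial>M)
     = (\<integral>\<^sup>+\<omega>. ennreal (w (eps 0 \<omega>)) \<partial>M) * (Gr * Cr ^ k)"
  proof -
    have "(\<Prod>s\<in>I. \<integral>\<^sup>+\<omega>. ennreal (\<phi>1 s (eps s \<omega>)) \<partial>M) = (\<Prod>s\<in>I. \<integral>\<^sup>+\<omega>. ennreal (c (eps s \<omega>) powr \<alpha>) \<partial>M)"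
      using tI by (intro prod.cong refl nn_integral_cong) (auto simp: \<phi>1_def)
    also have "\<dots> = Cr ^ k" unfolding I_def by (rule prodC)
    finally have A: "(\<Prod>s\<in>I. \<integral>\<^sup>+\<omega>. ennreal (\<phi>1 s (eps s \<omega>)) \<partial>M) = Cr ^ k" .
    have B: "(\<integral>\<^sup>+\<omega>. ennreal (\<phi>1 t (eps t \<omega>)) \<partial>M) = (\<integral>\<^sup>+\<omega>. ennreal (w (eps 0 \<omega>)) \<partial>M)"
      unfolding \<phi>1_def by simp (rule nn_eps, measurable)
    have C: "(\<integral>\<^sup>+\<omega>. ennreal (\<phi>1 r (eps r \<omega>)) \<partial>M) = Gr"
      using tI unfolding \<phi>1_def Gr_def by simp (rule nn_eps, measurable)
    show ?thesis using tI A B C by simp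
  qed
  also have "(\<Prod>s\<in>insert t I. \<integral>\<^sup>+\<omega>. ennreal (\<phi>2 s (eps s \<omega>)) \<partial>M)
     = (\<integral>\<^sup>+\<omega>. ennreal (w (eps 0 \<omega>)) \<partial>M) * Cr ^ k"
  proof -
    have "(\<Prod>s\<in>I. \<integral>\<^sup>+\<omega>. ennreal (\<phi>2 s (eps s \<omega>)) \<partial>M) = (\<Prod>s\<in>I. \<integral>\<^sup>+\<omega>. ennreal (c (eps s \<omega>) powr \<alpha>) \<partial>M)"
      using tI by (intro prod.cong refl nn_integral_cong) (auto simp: \<phi>2_def)
    also have "\<dots> = Cr ^ k" unfolding I_def by (rule prodC)
    finally have A: "(\<Prod>s\<in>I. \<integral>\<^sup>+\<omega>. ennreal (\<phi>2 s (eps s \<omega>)) \<partial>M) = Cr ^ k" .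
    have B: "(\<integral>\<^sup>+\<omega>. ennreal (\<phi>2 t (eps t \<omega>)) \<partial>M) = (\<integral>\<^sup>+\<omega>. ennreal (w (eps 0 \<omega>)) \<partial>M)"
      unfolding \<phi>2_def by simp (rule nn_eps, measurable)
    show ?thesis using tI A B by simp
  qed
  also have "(\<integral>\<^sup>+\<omega>. ennreal ((\<lambda>v. u v powr \<alpha>) (x r \<omega>)) \<partial>M) = Ur"
    unfolding Ur_def by (rule nn_x) measurable
  finally show ?thesis by (simp add: emeasure_space_1 algebra_simps)
qed

end

context setting begin

lemma ct_meas[measurable]: "(\<lambda>\<omega>. ct t k \<omega>) \<in> borel_measurable M"
proof -
  have "(\<lambda>\<omega>. ctp g u c (snd (path x \<omega>, path eps \<omega>)) (fst (path x \<omega>, path eps \<omega>)) t k) \<in> borel_measurable M"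
    by measurable
  then show ?thesis by simp
qed

definition "rho = integral\<^sup>L M (\<lambda>\<omega>. c (eps 0 \<omega>) powr \<alpha>)"

lemma rho: "Cr = ennreal rho" "0 \<le> rho" "rho < 1"
proof -
  show "Cr = ennreal rho"
    unfolding Cr_def rho_def using mom_c by (intro nn_integral_eq_integral) auto
  show "0 \<le> rho" unfolding rho_def by (intro integral_nonneg_AE) auto
  show "rho < 1" unfolding rho_def using mom_c by auto
qed

lemma geom_fin: "(\<Sum>k. Cr ^ k) < \<infinity>"
proof -
  have "(\<Sum>k. Cr ^ k) = (\<Sum>k. ennreal (rho ^ k))" using rho by (simp add: ennreal_power)
  also have "\<dots> = ennreal (1 / (1 - rho))"
    using rho by (intro suminf_ennreal_eq geometric_sums) auto
  finally show ?thesis by simp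
qed

definition "Wt t \<omega> = (\<Sum>k. ennreal (ct t k \<omega> powr \<alpha>))"

lemma Wt_meas[measurable]: "Wt t \<in> borel_measurable M"
  unfolding Wt_def by measurable

lemma Wt_int:
  fixes w :: "real \<Rightarrow> real"
  assumes wm[measurable]: "w \<in> borel_measurable borel" and wn: "\<And>v. 0 \<le> w v"
    and wf: "(\<integral>\<^sup>+\<omega>. ennreal (w (eps 0 \<omega>)) \<partial>M) < \<infinity>"
  shows "(\<integral>\<^sup>+\<omega>. ennreal (w (eps t \<omega>)) * Wt t \<omega> \<partial>M) < \<infinity>"
proof -
  have "(\<integral>\<^sup>+\<omega>. ennreal (w (eps t \<omega>)) * Wt t \<omega> \<partial>M) = (\<integral>\<^sup>+\<omega>. (\<Sum>k. ennreal (w (eps t \<omega>) * ct t k \<omega> powr \<alpha>)) \<partial>M)"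
    unfolding Wt_def using wn by (simp add: ennreal_mult)
  also have "\<dots> = (\<Sum>k. \<integral>\<^sup>+\<omega>. ennreal (w (eps t \<omega>) * ct t k \<omega> powr \<alpha>) \<partial>M)"
    by (rule nn_integral_suminf) measurable
  also have "\<dots> \<le> (\<Sum>k. (\<integral>\<^sup>+\<omega>. ennreal (w (eps 0 \<omega>)) \<partial>M) * (Gr + Ur) * Cr ^ k)"
    by (intro suminf_le term_bound[OF wm wn, THEN order_trans]) (auto simp: algebra_simps)
  also have "\<dots> = (\<integral>\<^sup>+\<omega>. ennreal (w (eps 0 \<omega>)) \<partial>M) * (Gr + Ur) * (\<Sum>k. Cr ^ k)"
    by simp
  also have "\<dots> < \<infinity>"
    using wf Gr_fin Ur_fin geom_fin by (simp add: ennreal_mult_less_top)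
  finally show ?thesis .
qed

lemma Wt_fin: "(\<integral>\<^sup>+\<omega>. Wt t \<omega> \<partial>M) < \<infinity>"
  using Wt_int[of "\<lambda>_. 1" t] by (simp add: emeasure_space_1)

lemma Wt_eps_fin: "(\<integral>\<^sup>+\<omega>. ennreal (\<bar>eps t \<omega>\<bar> powr (\<delta> * \<alpha>)) * Wt t \<omega> \<partial>M) < \<infinity>"
proof (rule Wt_int)
  show "(\<lambda>v. \<bar>v\<bar> powr (\<delta> * \<alpha>)) \<in> borel_measurable borel" by measurable
  have "(\<integral>\<^sup>+\<omega>. ennreal (\<bar>eps 0 \<omega>\<bar> powr (\<delta> * \<alpha>)) \<partial>M) = ennreal (integral\<^sup>L M (\<lambda>\<omega>. \<bar>eps 0 \<omega>\<bar> powr (\<delta> * \<alpha>)))"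
    using mom_eps by (intro nn_integral_eq_integral) auto
  then show "(\<integral>\<^sup>+\<omega>. ennreal (\<bar>eps 0 \<omega>\<bar> powr (\<delta> * \<alpha>)) \<partial>M) < \<infinity>" by simp
qed simp

lemma ct_nonneg: "0 \<le> ct t k \<omega>"
  using g_nonneg u_nonneg c_nonneg by (rule ctp_nonneg)

lemma summable_of_Wt: "Wt t \<omega> \<noteq> \<infinity> \<Longrightarrow> summable (\<lambda>k. ct t k \<omega>)"
  unfolding Wt_def
  by (rule summable_of_powr[OF ct_nonneg alpha summable_suminf_not_top]) auto

lemma AE_summable: "AE \<omega> in M. summable (\<lambda>k. ct t k \<omega>)"
proof -
  have "AE \<omega> in M. Wt t \<omega> \<noteq> \<infinity>"
    using Wt_fin[of t] by (intro nn_integral_PInf_AE) auto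
  then show ?thesis by (rule eventually_mono) (rule summable_of_Wt)
qed

lemma AE_summable1: "AE \<omega> in M. summable (\<lambda>k. ct t (Suc k) \<omega>)"
  using AE_summable[of t] by (auto simp: summable_Suc_iff)

lemma sg_nonneg: "0 \<le> sg t \<omega>"
  by (simp add: sg_def sig_def)

lemma Vp_eq: "summable (\<lambda>k. ct t k \<omega>) \<Longrightarrow> Vp g u c (path eps \<omega>) (path x \<omega>) t = (\<Sum>k. ct t k \<omega>)"
  unfolding Vp_def using suminf_split_head[of "\<lambda>k. ct t k \<omega>"]
  by (simp add: ctp_0 path_def)

lemma Vp_nonneg: "summable (\<lambda>k. ct t k \<omega>) \<Longrightarrow> 0 \<le> Vp g u c (path eps \<omega>) (path x \<omega>) t"
  using Vp_eq suminf_nonneg ct_nonneg by metis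

lemma sg_powr_delta: "summable (\<lambda>k. ct t (Suc k) \<omega>) \<Longrightarrow> sg t \<omega> powr \<delta> = Vp g u c (path eps \<omega>) (path x \<omega>) t"
proof -
  assume s: "summable (\<lambda>k. ct t (Suc k) \<omega>)"
  then have s0: "summable (\<lambda>k. ct t k \<omega>)" by (simp add: summable_Suc_iff)
  have "sg t \<omega> powr \<delta> = (Vp g u c (path eps \<omega>) (path x \<omega>) t powr (1 / \<delta>)) powr \<delta>"
    using s by (simp add: sg_def sig_def)
  also have "\<dots> = Vp g u c (path eps \<omega>) (path x \<omega>) t"
    using delta_pos Vp_nonneg[OF s0] by (simp add: powr_powr)
  finally show ?thesis .
qed

lemma sg_powr_le: "ennreal (sg t \<omega> powr (\<alpha> * \<delta>)) \<le> Wt t \<omega>"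
proof (cases "summable (\<lambda>k. ct t (Suc k) \<omega>)")
  case False
  then have "sg t \<omega> = 0" by (simp add: sg_def sig_def)
  then show ?thesis by simp
next
  case True
  then have s0: "summable (\<lambda>k. ct t k \<omega>)" by (simp add: summable_Suc_iff)
  have "sg t \<omega> powr (\<alpha> * \<delta>) = (Vp g u c (path eps \<omega>) (path x \<omega>) t powr (1 / \<delta>)) powr (\<alpha> * \<delta>)"
    using True by (simp add: sg_def sig_def)
  also have "\<dots> = Vp g u c (path eps \<omega>) (path x \<omega>) t powr \<alpha>"
    using delta_pos by (simp add: powr_powr)
  also have "\<dots> = (\<Sum>k. ct t k \<omega>) powr \<alpha>" using Vp_eq[OF s0] by simp
  finally show ?thesis
    unfolding Wt_def using powr_suminf_le[OF ct_nonneg alpha s0] by simp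
qed

lemma RR_integrable: "integrable M (\<lambda>\<omega>. \<bar>RR t \<omega>\<bar> powr (\<alpha> * \<delta>))"
proof (rule integrableI_nonneg)
  show "(\<lambda>\<omega>. \<bar>RR t \<omega>\<bar> powr (\<alpha> * \<delta>)) \<in> borel_measurable M" by measurable
  show "AE \<omega> in M. 0 \<le> \<bar>RR t \<omega>\<bar> powr (\<alpha> * \<delta>)" by simp
  have "(\<integral>\<^sup>+\<omega>. ennreal (\<bar>RR t \<omega>\<bar> powr (\<alpha> * \<delta>)) \<partial>M) \<le> (\<integral>\<^sup>+\<omega>. ennreal (\<bar>eps t \<omega>\<bar> powr (\<delta> * \<alpha>)) * Wt t \<omega> \<partial>M)"
  proof (rule nn_integral_mono)
    fix \<omega>
    have "\<bar>RR t \<omega>\<bar> powr (\<alpha> * \<delta>) = \<bar>eps t \<omega>\<bar> powr (\<delta> * \<alpha>) * sg t \<omega> powr (\<alpha> * \<delta>)"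
      using sg_nonneg[of t \<omega>] by (simp add: RR_def abs_mult powr_mult mult.commute)
    then have "ennreal (\<bar>RR t \<omega>\<bar> powr (\<alpha> * \<delta>)) = ennreal (\<bar>eps t \<omega>\<bar> powr (\<delta> * \<alpha>)) * ennreal (sg t \<omega> powr (\<alpha> * \<delta>))"
      by (simp add: ennreal_mult)
    also have "\<dots> \<le> ennreal (\<bar>eps t \<omega>\<bar> powr (\<delta> * \<alpha>)) * Wt t \<omega>"
      by (intro mult_left_mono sg_powr_le) auto
    finally show "ennreal (\<bar>RR t \<omega>\<bar> powr (\<alpha> * \<delta>)) \<le> ennreal (\<bar>eps t \<omega>\<bar> powr (\<delta> * \<alpha>)) * Wt t \<omega>" .
  qed
  also have "\<dots> < \<infinity>" by (rule Wt_eps_fin)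
  finally show "(\<integral>\<^sup>+\<omega>. ennreal (\<bar>RR t \<omega>\<bar> powr (\<alpha> * \<delta>)) \<partial>M) < \<infinity>" .
qed

end

context setting begin

lemma model_sol: "model_solution M \<delta> g u c eps x RR sg"
  unfolding model_solution_def
proof (intro conjI)
  show "\<forall>t. RR t \<in> borel_measurable M \<and> sg t \<in> borel_measurable M" by simp
  show "\<forall>t. AE \<omega> in M. 0 \<le> sg t \<omega> \<and> RR t \<omega> = sg t \<omega> * eps t \<omega> \<and>
     sg t \<omega> powr \<delta> = g (eps (t - 1) \<omega>) + u (x (t - 1) \<omega>) + c (eps (t - 1) \<omega>) * sg (t - 1) \<omega> powr \<delta>"
  proof
    fix t :: int
    show "AE \<omega> in M. 0 \<le> sg t \<omega> \<and> RR t \<omega> = sg t \<omega> * eps t \<omega> \<and>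
     sg t \<omega> powr \<delta> = g (eps (t - 1) \<omega>) + u (x (t - 1) \<omega>) + c (eps (t - 1) \<omega>) * sg (t - 1) \<omega> powr \<delta>"
    using AE_summable1[of "t - 1"]
  proof (rule eventually_mono)
    fix \<omega> assume s: "summable (\<lambda>k. ct (t - 1) (Suc k) \<omega>)"
    note r = Vp_rec[OF s]
    have "sg t \<omega> powr \<delta> = Vp g u c (path eps \<omega>) (path x \<omega>) t" by (rule sg_powr_delta[OF r(1)])
    also have "\<dots> = g (eps (t - 1) \<omega>) + u (x (t - 1) \<omega>) + c (eps (t - 1) \<omega>) * Vp g u c (path eps \<omega>) (path x \<omega>) (t - 1)"
      using r(2) by (simp add: path_def)
    also have "Vp g u c (path eps \<omega>) (path x \<omega>) (t - 1) = sg (t - 1) \<omega> powr \<delta>"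
      by (rule sg_powr_delta[OF s, symmetric])
    finally show "0 \<le> sg t \<omega> \<and> RR t \<omega> = sg t \<omega> * eps t \<omega> \<and>
     sg t \<omega> powr \<delta> = g (eps (t - 1) \<omega>) + u (x (t - 1) \<omega>) + c (eps (t - 1) \<omega>) * sg (t - 1) \<omega> powr \<delta>"
      by (simp add: sg_nonneg RR_def)
  qed
  qed
qed

lemma stat_sol: "stationary_solution_of_order M (\<alpha> * \<delta>) \<delta> g u c eps x RR sg"
  unfolding stationary_solution_of_order_def using model_sol RS_stationary RR_integrable by blast

lemma causal_rep: "AE \<omega> in M.
          RR t \<omega> = sg t \<omega> * eps t \<omega> \<and>
          summable (\<lambda>k. causal_term g u c eps x t (Suc k) \<omega>) \<and>
          sg t \<omega> powr \<delta> = g (eps (t - 1) \<omega>) + u (x (t - 1) \<omega>)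
              + (\<Sum>k. causal_term g u c eps x t (Suc k) \<omega>)"
  using AE_summable1[of t]
proof (rule eventually_mono)
  fix \<omega> assume s: "summable (\<lambda>k. ct t (Suc k) \<omega>)"
  then show "RR t \<omega> = sg t \<omega> * eps t \<omega> \<and>
          summable (\<lambda>k. causal_term g u c eps x t (Suc k) \<omega>) \<and>
          sg t \<omega> powr \<delta> = g (eps (t - 1) \<omega>) + u (x (t - 1) \<omega>)
              + (\<Sum>k. causal_term g u c eps x t (Suc k) \<omega>)"
    using sg_powr_delta[OF s] by (simp add: causal_term_eq RR_def Vp_def path_def)
qed

end

lemma (in prob_space) meas_tendsto0:
  fixes f :: "nat \<Rightarrow> 'a \<Rightarrow> real"
  assumes fm[measurable]: "\<And>n. f n \<in> borel_measurable M"
    and lim: "AE \<omega> in M. (\<lambda>n. f n \<omega>) \<longlonglongrightarrow> 0" and eta: "0 < \<eta>"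
  shows "(\<lambda>n. prob {\<omega>\<in>space M. \<eta> < \<bar>f n \<omega>\<bar>}) \<longlonglongrightarrow> 0"
proof -
  define s :: "nat \<Rightarrow> 'a \<Rightarrow> real" where "s n = indicator {\<omega>\<in>space M. \<eta> < \<bar>f n \<omega>\<bar>}" for n
  have sm[measurable]: "s n \<in> borel_measurable M" for n unfolding s_def by measurable
  have "(\<lambda>n. integral\<^sup>L M (s n)) \<longlonglongrightarrow> integral\<^sup>L M (\<lambda>_. 0::real)"
  proof (rule integral_dominated_convergence[where w="\<lambda>_. 1"])
    show "AE \<omega> in M. (\<lambda>n. s n \<omega>) \<longlonglongrightarrow> 0"
      using lim
    proof (rule eventually_mono)
      fix \<omega> assume l: "(\<lambda>n. f n \<omega>) \<longlonglongrightarrow> 0"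
      then have "eventually (\<lambda>n. \<bar>f n \<omega>\<bar> < \<eta>) sequentially"
        using eta by (metis (no_types) order_tendstoD(2) tendsto_rabs_zero)
      then have "eventually (\<lambda>n. s n \<omega> = 0) sequentially"
        by (rule eventually_mono) (auto simp: s_def)
      then show "(\<lambda>n. s n \<omega>) \<longlonglongrightarrow> 0" by (rule tendsto_eventually)
    qed
    show "AE \<omega> in M. norm (s n \<omega>) \<le> 1" for n by (auto simp: s_def indicator_def)
  qed auto
  then show ?thesis by (simp add: s_def)
qed

lemma stat_marg:
  assumes "strictly_stationary M N Z"
  shows "distr M N (Z s) = distr M N (Z 0)"
proof -
  have m: "\<And>t. Z t \<in> measurable M N" using assms by (simp add: strictly_stationary_def)
  have pm: "path (\<lambda>r. Z (r + s)) \<in> measurable M (PiM UNIV (\<lambda>_. N))" by (rule path_meas) (simp add: m)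
  have pm0: "path Z \<in> measurable M (PiM UNIV (\<lambda>_. N))" by (rule path_meas) (simp add: m)
  have "distr M N (Z s) = distr M N ((\<lambda>f. f 0) \<circ> path (\<lambda>r. Z (r + s)))"
    by (simp add: o_def path_def)
  also have "\<dots> = distr (distr M (PiM UNIV (\<lambda>_. N)) (path (\<lambda>r. Z (r + s)))) N (\<lambda>f. f 0)"
    by (rule distr_distr[symmetric]) (auto intro!: pm)
  also have "\<dots> = distr (distr M (PiM UNIV (\<lambda>_. N)) (path Z)) N (\<lambda>f. f 0)"
    using assms by (simp add: strictly_stationary_def)
  also have "\<dots> = distr M N ((\<lambda>f. f 0) \<circ> path Z)"
    by (rule distr_distr) (auto intro!: pm0)
  finally show ?thesis by (simp add: o_def path_def)
qed

context setting begin

definition "Pn t n \<omega> = (\<Prod>j<n. c (eps (t - 1 - int j) \<omega>))"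

lemma Pn_meas[measurable]: "Pn t n \<in> borel_measurable M" unfolding Pn_def by measurable

lemma Pn_nonneg: "0 \<le> Pn t n \<omega>" unfolding Pn_def using c_nonneg by (auto intro: prod_nonneg)

lemma Pn_int: "(\<integral>\<^sup>+\<omega>. ennreal (Pn t n \<omega> powr \<alpha>) \<partial>M) = Cr ^ n"
proof -
  have "Pn t n \<omega> powr \<alpha> = (\<Prod>s\<in>Ik t n. c (eps s \<omega>) powr \<alpha>) * (\<lambda>_. 1::real) (x t \<omega>)" for \<omega>
    unfolding Pn_def by (simp add: prod_powr_distrib prod_Ik[where F="\<lambda>s. c (eps s \<omega>) powr \<alpha>"])
  then have "(\<integral>\<^sup>+\<omega>. ennreal (Pn t n \<omega> powr \<alpha>) \<partial>M) = (\<integral>\<^sup>+\<omega>. ennreal ((\<Prod>s\<in>Ik t n. (\<lambda>s v. c v powr \<alpha>) s (eps s \<omega>)) * (\<lambda>_. 1::real) (x t \<omega>)) \<partial>M)"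
    by simp
  also have "\<dots> = (\<Prod>s\<in>Ik t n. \<integral>\<^sup>+\<omega>. ennreal ((\<lambda>s v. c v powr \<alpha>) s (eps s \<omega>)) \<partial>M) * (\<integral>\<^sup>+\<omega>. ennreal ((\<lambda>_. 1::real) (x t \<omega>)) \<partial>M)"
    using Ik_props by (intro factor) auto
  also have "\<dots> = Cr ^ n" using prodC by (simp add: emeasure_space_1)
  finally show ?thesis .
qed

lemma Pn_lim: "AE \<omega> in M. (\<lambda>n. Pn t n \<omega>) \<longlonglongrightarrow> 0"
proof -
  have "(\<integral>\<^sup>+\<omega>. (\<Sum>n. ennreal (Pn t n \<omega> powr \<alpha>)) \<partial>M) = (\<Sum>n. \<integral>\<^sup>+\<omega>. ennreal (Pn t n \<omega> powr \<alpha>) \<partial>M)"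
    by (rule nn_integral_suminf) measurable
  also have "\<dots> = (\<Sum>n. Cr ^ n)" by (simp add: Pn_int)
  finally have "(\<integral>\<^sup>+\<omega>. (\<Sum>n. ennreal (Pn t n \<omega> powr \<alpha>)) \<partial>M) \<noteq> \<infinity>" using geom_fin by simp
  then have "AE \<omega> in M. (\<Sum>n. ennreal (Pn t n \<omega> powr \<alpha>)) \<noteq> \<infinity>"
    by (intro nn_integral_PInf_AE) measurable
  then show ?thesis
  proof (rule eventually_mono)
    fix \<omega> assume "(\<Sum>n. ennreal (Pn t n \<omega> powr \<alpha>)) \<noteq> \<infinity>"
    then have "summable (\<lambda>n. Pn t n \<omega>)"
      by (intro summable_of_powr[OF Pn_nonneg alpha summable_suminf_not_top]) auto
    then show "(\<lambda>n. Pn t n \<omega>) \<longlonglongrightarrow> 0" by (rule summable_LIMSEQ_zero)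
  qed
qed

lemma iterate:
  assumes sol: "model_solution M \<delta> g u c eps x R' \<sigma>'"
  shows "AE \<omega> in M. \<sigma>' t \<omega> powr \<delta> = (\<Sum>k<n. ct t k \<omega>) + Pn t n \<omega> * \<sigma>' (t - int n) \<omega> powr \<delta>"
proof (induction n)
  case 0 then show ?case by (simp add: Pn_def)
next
  case (Suc n)
  have rec: "AE \<omega> in M. \<sigma>' (t - int n) \<omega> powr \<delta> = g (eps (t - int n - 1) \<omega>) + u (x (t - int n - 1) \<omega>)
       + c (eps (t - int n - 1) \<omega>) * \<sigma>' (t - int n - 1) \<omega> powr \<delta>"
    using sol unfolding model_solution_def by (auto elim!: allE[of _ "t - int n"] elim: eventually_mono)
  show ?case using Suc rec
  proof (eventually_elim)
    case (elim \<omega>)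
    have ct: "ct t n \<omega> = Pn t n \<omega> * (g (eps (t - int n - 1) \<omega>) + u (x (t - int n - 1) \<omega>))"
      by (simp add: ctp_def Pn_def path_def algebra_simps)
    have P: "Pn t (Suc n) \<omega> = Pn t n \<omega> * c (eps (t - int n - 1) \<omega>)"
      by (simp add: Pn_def algebra_simps)
    have T: "t - int (Suc n) = t - int n - 1" by simp
    show ?case using elim unfolding T by (simp add: ct P algebra_simps)
  qed
qed

end

context setting begin

lemma unique:
  assumes sol: "stationary_solution_of_order M (\<alpha> * \<delta>) \<delta> g u c eps x R' \<sigma>'"
  shows "AE \<omega> in M. R' t \<omega> = RR t \<omega> \<and> \<sigma>' t \<omega> = sg t \<omega>"
proof -
  have ms: "model_solution M \<delta> g u c eps x R' \<sigma>'"
    and st: "strictly_stationary M borel (\<lambda>t \<omega>. (R' t \<omega>, \<sigma>' t \<omega>))"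
    using sol by (auto simp: stationary_solution_of_order_def)
  have sm[measurable]: "\<sigma>' s \<in> borel_measurable M" "R' s \<in> borel_measurable M" for s
    using ms by (auto simp: model_solution_def)
  define V where "V \<omega> = (\<Sum>k. ct t k \<omega>)" for \<omega>
  define tl where "tl n \<omega> = (if summable (\<lambda>k. ct t k \<omega>) then V \<omega> - (\<Sum>k<n. ct t k \<omega>) else 0)" for n \<omega>
  define D where "D \<omega> = \<sigma>' t \<omega> powr \<delta> - V \<omega>" for \<omega>
  have Vm[measurable]: "V \<in> borel_measurable M" unfolding V_def by measurable
  have tlm[measurable]: "tl n \<in> borel_measurable M" for n unfolding tl_def by measurable
  have Dm[measurable]: "D \<in> borel_measurable M" unfolding D_def by measurable
  have tl_lim: "(\<lambda>n. tl n \<omega>) \<longlonglongrightarrow> 0" for \<omega>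
  proof (cases "summable (\<lambda>k. ct t k \<omega>)")
    case True
    then have "(\<lambda>n. V \<omega> - (\<Sum>k<n. ct t k \<omega>)) \<longlonglongrightarrow> V \<omega> - V \<omega>"
      unfolding V_def by (intro tendsto_diff tendsto_const summable_LIMSEQ)
    then show ?thesis using True by (simp add: tl_def)
  qed (simp add: tl_def)
  have tl_nonneg: "0 \<le> tl n \<omega>" for n \<omega>
    unfolding tl_def V_def using sum_le_suminf[of "\<lambda>k. ct t k \<omega>" "{..<n}"] ct_nonneg by auto
  have good: "AE \<omega> in M. \<forall>n. \<sigma>' t \<omega> powr \<delta> = (\<Sum>k<n. ct t k \<omega>) + Pn t n \<omega> * \<sigma>' (t - int n) \<omega> powr \<delta>"
    unfolding AE_all_countable using iterate[OF ms] by blast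
  have bound: "\<bar>D \<omega>\<bar> \<le> tl n \<omega> + Pn t n \<omega> * \<sigma>' (t - int n) \<omega> powr \<delta>"
    if s: "summable (\<lambda>k. ct t k \<omega>)"
      and it: "\<sigma>' t \<omega> powr \<delta> = (\<Sum>k<n. ct t k \<omega>) + Pn t n \<omega> * \<sigma>' (t - int n) \<omega> powr \<delta>" for \<omega> n
  proof -
    have "D \<omega> = Pn t n \<omega> * \<sigma>' (t - int n) \<omega> powr \<delta> - tl n \<omega>"
      using s it by (simp add: D_def tl_def)
    moreover have "0 \<le> Pn t n \<omega> * \<sigma>' (t - int n) \<omega> powr \<delta>" using Pn_nonneg by simp
    ultimately show ?thesis using tl_nonneg[of n \<omega>] by linarith
  qed
  have marg: "prob {\<omega>\<in>space M. K < \<sigma>' s \<omega> powr \<delta>} = prob {\<omega>\<in>space M. K < \<sigma>' 0 \<omega> powr \<delta>}" for K s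
  proof -
    have d: "distr M borel (\<lambda>\<omega>. (R' s \<omega>, \<sigma>' s \<omega>)) = distr M borel (\<lambda>\<omega>. (R' 0 \<omega>, \<sigma>' 0 \<omega>))"
      using stat_marg[OF st, of s] by simp
    have S: "{p::real \<times> real. K < snd p powr \<delta>} \<in> sets borel"
    proof -
      have "Measurable.pred (borel \<Otimes>\<^sub>M borel) (\<lambda>p::real \<times> real. K < snd p powr \<delta>)" by measurable
      then show ?thesis by (simp add: borel_prod pred_def)
    qed
    have "prob {\<omega>\<in>space M. K < \<sigma>' s \<omega> powr \<delta>} = measure (distr M borel (\<lambda>\<omega>. (R' s \<omega>, \<sigma>' s \<omega>))) {p. K < snd p powr \<delta>}"
      by (subst measure_distr) (auto intro!: arg_cong[where f=prob] S)
    also have "\<dots> = measure (distr M borel (\<lambda>\<omega>. (R' 0 \<omega>, \<sigma>' 0 \<omega>))) {p. K < snd p powr \<delta>}" using d by simp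
    also have "\<dots> = prob {\<omega>\<in>space M. K < \<sigma>' 0 \<omega> powr \<delta>}"
      by (subst measure_distr) (auto intro!: arg_cong[where f=prob] S)
    finally show ?thesis .
  qed
  have qlim: "(\<lambda>m. prob {\<omega>\<in>space M. 1/2 < \<bar>\<sigma>' 0 \<omega> powr \<delta> * inverse (real (Suc m))\<bar>}) \<longlonglongrightarrow> 0"
    by (rule meas_tendsto0) (auto intro!: AE_I2 tendsto_mult_right_zero LIMSEQ_inverse_real_of_nat simp del: of_nat_Suc)
  have zero: "prob {\<omega>\<in>space M. summable (\<lambda>k. ct t k \<omega>) \<and> \<eta> < \<bar>D \<omega>\<bar>} = 0" if eta: "0 < \<eta>" for \<eta>
  proof -
    let ?A = "{\<omega>\<in>space M. summable (\<lambda>k. ct t k \<omega>) \<and> \<eta> < \<bar>D \<omega>\<bar>}"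
    have Am: "?A \<in> sets M" by measurable
    have le: "prob ?A \<le> e" if e: "0 < e" for e
    proof -
      have "eventually (\<lambda>m. prob {\<omega>\<in>space M. 1/2 < \<bar>\<sigma>' 0 \<omega> powr \<delta> * inverse (real (Suc m))\<bar>} < e / 3) sequentially"
        using qlim e by (intro order_tendstoD(2)) auto
      then obtain m where m: "prob {\<omega>\<in>space M. 1/2 < \<bar>\<sigma>' 0 \<omega> powr \<delta> * inverse (real (Suc m))\<bar>} < e / 3"
        by (auto simp: eventually_sequentially)
      define K where "K = real (Suc m) / 2"
      have Kp: "0 < K" by (simp add: K_def)
      have qK: "prob {\<omega>\<in>space M. K < \<sigma>' 0 \<omega> powr \<delta>} < e / 3"
      proof -
        have "{\<omega>\<in>space M. K < \<sigma>' 0 \<omega> powr \<delta>} = {\<omega>\<in>space M. 1/2 < \<bar>\<sigma>' 0 \<omega> powr \<delta> * inverse (real (Suc m))\<bar>}"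
          by (auto simp: K_def field_simps)
        then show ?thesis using m by simp
      qed
      define a where "a = \<eta> / (2 * K)"
      have ap: "0 < a" using eta Kp by (simp add: a_def)
      have l1: "(\<lambda>n. prob {\<omega>\<in>space M. \<eta> / 2 < \<bar>tl n \<omega>\<bar>}) \<longlonglongrightarrow> 0"
        using eta by (intro meas_tendsto0 AE_I2 tl_lim) auto
      have l2: "(\<lambda>n. prob {\<omega>\<in>space M. a < \<bar>Pn t n \<omega>\<bar>}) \<longlonglongrightarrow> 0"
        using ap by (intro meas_tendsto0 Pn_lim) auto
      have "eventually (\<lambda>n. prob {\<omega>\<in>space M. \<eta> / 2 < \<bar>tl n \<omega>\<bar>} < e / 3) sequentially"
        using l1 e by (intro order_tendstoD(2)) auto
      moreover have "eventually (\<lambda>n. prob {\<omega>\<in>space M. a < \<bar>Pn t n \<omega>\<bar>} < e / 3) sequentially"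
        using l2 e by (intro order_tendstoD(2)) auto
      ultimately have "eventually (\<lambda>n. prob {\<omega>\<in>space M. \<eta> / 2 < \<bar>tl n \<omega>\<bar>} < e / 3 \<and> prob {\<omega>\<in>space M. a < \<bar>Pn t n \<omega>\<bar>} < e / 3) sequentially"
        by (rule eventually_conj)
      then obtain n where n1: "prob {\<omega>\<in>space M. \<eta> / 2 < \<bar>tl n \<omega>\<bar>} < e / 3"
        and n2: "prob {\<omega>\<in>space M. a < \<bar>Pn t n \<omega>\<bar>} < e / 3"
        by (auto simp: eventually_sequentially)
      let ?B1 = "{\<omega>\<in>space M. \<eta> / 2 < \<bar>tl n \<omega>\<bar>}"
      let ?B2 = "{\<omega>\<in>space M. a < \<bar>Pn t n \<omega>\<bar>}"
      let ?B3 = "{\<omega>\<in>space M. K < \<sigma>' (t - int n) \<omega> powr \<delta>}"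
      have B3: "prob ?B3 < e / 3" using qK marg[of K "t - int n"] by simp
      have "prob ?A \<le> prob (?B1 \<union> ?B2 \<union> ?B3)"
      proof (rule finite_measure_mono_AE)
        show "?B1 \<union> ?B2 \<union> ?B3 \<in> sets M" by measurable
        show "AE \<omega> in M. \<omega> \<in> ?A \<longrightarrow> \<omega> \<in> ?B1 \<union> ?B2 \<union> ?B3"
          using good
        proof (rule eventually_mono)
          fix \<omega> assume it: "\<forall>n. \<sigma>' t \<omega> powr \<delta> = (\<Sum>k<n. ct t k \<omega>) + Pn t n \<omega> * \<sigma>' (t - int n) \<omega> powr \<delta>"
          show "\<omega> \<in> ?A \<longrightarrow> \<omega> \<in> ?B1 \<union> ?B2 \<union> ?B3"
          proof (intro impI, rule ccontr)
            assume A: "\<omega> \<in> ?A" and nB: "\<omega> \<notin> ?B1 \<union> ?B2 \<union> ?B3"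
            then have h1: "tl n \<omega> \<le> \<eta> / 2" and h2: "Pn t n \<omega> \<le> a" and h3: "\<sigma>' (t - int n) \<omega> powr \<delta> \<le> K"
              using tl_nonneg[of n \<omega>] Pn_nonneg[of t n \<omega>] by auto
            have "Pn t n \<omega> * \<sigma>' (t - int n) \<omega> powr \<delta> \<le> a * K"
              using h2 h3 Pn_nonneg[of t n \<omega>] ap by (intro mult_mono) auto
            also have "a * K = \<eta> / 2" using Kp by (simp add: a_def)
            finally have "\<bar>D \<omega>\<bar> \<le> \<eta>" using bound[of \<omega> n] A it h1 by auto
            then show False using A by auto
          qed
        qed
      qed
      also have "\<dots> \<le> prob ?B1 + prob ?B2 + prob ?B3"
        by (intro order_trans[OF measure_Un_le] add_mono order.refl measure_Un_le) measurable
      also have "\<dots> \<le> e" using n1 n2 B3 by simp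
      finally show ?thesis .
    qed
    have "prob ?A \<le> 0"
    proof (rule field_le_epsilon)
      fix e :: real assume "0 < e" then show "prob ?A \<le> 0 + e" using le by simp
    qed
    then show ?thesis using measure_nonneg[of M ?A] by linarith
  qed
  have AE0: "AE \<omega> in M. summable (\<lambda>k. ct t k \<omega>) \<longrightarrow> \<bar>D \<omega>\<bar> \<le> inverse (real (Suc m))" for m
  proof -
    have "emeasure M {\<omega>\<in>space M. summable (\<lambda>k. ct t k \<omega>) \<and> inverse (real (Suc m)) < \<bar>D \<omega>\<bar>} = 0"
      using zero[of "inverse (real (Suc m))"] by (simp add: emeasure_eq_measure)
    then show ?thesis by (subst AE_iff_measurable[OF _ refl]) (auto simp: not_le)
  qed
  have AED: "AE \<omega> in M. summable (\<lambda>k. ct t k \<omega>) \<longrightarrow> D \<omega> = 0"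
  proof -
    have "AE \<omega> in M. \<forall>m. summable (\<lambda>k. ct t k \<omega>) \<longrightarrow> \<bar>D \<omega>\<bar> \<le> inverse (real (Suc m))"
      unfolding AE_all_countable using AE0 by blast
    then show ?thesis
    proof (rule eventually_mono)
      fix \<omega> assume h: "\<forall>m. summable (\<lambda>k. ct t k \<omega>) \<longrightarrow> \<bar>D \<omega>\<bar> \<le> inverse (real (Suc m))"
      show "summable (\<lambda>k. ct t k \<omega>) \<longrightarrow> D \<omega> = 0"
      proof
        assume "summable (\<lambda>k. ct t k \<omega>)"
        then have "\<forall>m. \<bar>D \<omega>\<bar> \<le> inverse (real (Suc m))" using h by auto
        then have "\<bar>D \<omega>\<bar> \<le> 0"
          by (intro LIMSEQ_le_const[OF LIMSEQ_inverse_real_of_nat]) auto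
        then show "D \<omega> = 0" by simp
      qed
    qed
  qed
  have nn: "AE \<omega> in M. 0 \<le> \<sigma>' t \<omega> \<and> R' t \<omega> = \<sigma>' t \<omega> * eps t \<omega>"
    using ms unfolding model_solution_def by (auto elim!: allE[of _ t] elim: eventually_mono)
  show ?thesis
    using AED nn AE_summable1[of t]
  proof eventually_elim
    case (elim \<omega>)
    then have s1: "summable (\<lambda>k. ct t (Suc k) \<omega>)" by simp
    then have s0: "summable (\<lambda>k. ct t k \<omega>)" by (simp add: summable_Suc_iff)
    have e1: "\<sigma>' t \<omega> powr \<delta> = V \<omega>" using elim s0 by (simp add: D_def)
    have e2: "sg t \<omega> powr \<delta> = V \<omega>" using sg_powr_delta[OF s1] Vp_eq[OF s0] by (simp add: V_def)
    have "\<sigma>' t \<omega> = (\<sigma>' t \<omega> powr \<delta>) powr (1 / \<delta>)" using elim delta_pos by (simp add: powr_powr)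
    also have "\<dots> = (sg t \<omega> powr \<delta>) powr (1 / \<delta>)" using e1 e2 by simp
    also have "\<dots> = sg t \<omega>" using sg_nonneg[of t \<omega>] delta_pos by (simp add: powr_powr)
    finally have "\<sigma>' t \<omega> = sg t \<omega>" .
    then show ?case using elim by (simp add: RR_def)
  qed
qed

end

lemma approx_sigma:
  fixes \<nu> :: "'b measure" and \<F> :: "'b set set"
  assumes fm: "finite_measure \<nu>"
    and sets_eq: "sets \<nu> = sigma_sets \<Omega> G" and G_sub: "G \<subseteq> Pow \<Omega>" and sp: "space \<nu> = \<Omega>"
    and Fsub: "\<F> \<subseteq> sets \<nu>" and Fe: "{} \<in> \<F>" and Fc: "\<And>A. A \<in> \<F> \<Longrightarrow> \<Omega> - A \<in> \<F>"
    and Fu: "\<And>A B. A \<in> \<F> \<Longrightarrow> B \<in> \<F> \<Longrightarrow> A \<union> B \<in> \<F>"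
    and gen: "\<And>A e. A \<in> G \<Longrightarrow> 0 < e \<Longrightarrow> \<exists>F\<in>\<F>. measure \<nu> ((A - F) \<union> (F - A)) < e"
    and A: "A \<in> sigma_sets \<Omega> G"
  shows "\<forall>e>0. \<exists>F\<in>\<F>. measure \<nu> ((A - F) \<union> (F - A)) < e"
  using A
proof (induction rule: sigma_sets.induct)
  case (Basic a) then show ?case using gen by blast
next
  case Empty show ?case using Fe by (intro allI impI bexI[of _ "{}"]) auto
next
  case (Compl a)
  have aO: "a \<subseteq> \<Omega>" using sigma_sets_into_sp[OF G_sub Compl.hyps] .
  show ?case
  proof (intro allI impI)
    fix e :: real assume e: "0 < e"
    then obtain F where F: "F \<in> \<F>" "measure \<nu> ((a - F) \<union> (F - a)) < e" using Compl.IH by blast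
    have FO: "F \<subseteq> \<Omega>" using F(1) Fsub sets.sets_into_space sp by blast
    have "((\<Omega> - a) - (\<Omega> - F)) \<union> ((\<Omega> - F) - (\<Omega> - a)) = (a - F) \<union> (F - a)" using aO FO by blast
    then show "\<exists>F\<in>\<F>. measure \<nu> (((\<Omega> - a) - F) \<union> (F - (\<Omega> - a))) < e"
      using F Fc by (intro bexI[of _ "\<Omega> - F"]) auto
  qed
next
  case (Union a)
  interpret finite_measure \<nu> by (rule fm)
  have as: "a i \<in> sets \<nu>" for i using Union.hyps sets_eq by auto
  show ?case
  proof (intro allI impI)
    fix e :: real assume e: "0 < e"
    define U where "U n = (\<Union>i<n. a i)" for n
    have Us: "U n \<in> sets \<nu>" for n unfolding U_def using as by auto
    have Uinc: "incseq U" unfolding U_def incseq_def by (auto intro: less_le_trans)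
    have UU: "(\<Union>n. U n) = (\<Union>i. a i)" unfolding U_def by auto
    have "(\<lambda>n. measure \<nu> (U n)) \<longlonglongrightarrow> measure \<nu> (\<Union>i. a i)"
      using finite_Lim_measure_incseq[of U] Us Uinc UU by auto
    then have "eventually (\<lambda>n. measure \<nu> (\<Union>i. a i) - e / 2 < measure \<nu> (U n)) sequentially"
      using e by (intro order_tendstoD(1)) auto
    then obtain n where n: "measure \<nu> (\<Union>i. a i) - e / 2 < measure \<nu> (U n)"
      by (auto simp: eventually_sequentially)
    have "\<forall>i. \<exists>F\<in>\<F>. measure \<nu> ((a i - F) \<union> (F - a i)) < e / (2 * real (Suc n))"
      using Union.IH e by auto
    then obtain F where F: "\<And>i. F i \<in> \<F>" "\<And>i. measure \<nu> ((a i - F i) \<union> (F i - a i)) < e / (2 * real (Suc n))"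
      by metis
    define FF where "FF = (\<Union>i<n. F i)"
    have FFin: "FF \<in> \<F>" unfolding FF_def
    proof (induction n)
      case 0 then show ?case using Fe by simp
    next
      case (Suc n)
      have "(\<Union>i<Suc n. F i) = F n \<union> (\<Union>i<n. F i)" by (auto simp: lessThan_Suc)
      then show ?case using Fu[OF F(1) Suc] by simp
    qed
    have Fs: "F i \<in> sets \<nu>" for i using F(1) Fsub by auto
    have D: "((\<Union>i. a i) - FF) \<union> (FF - (\<Union>i. a i)) \<subseteq> ((\<Union>i. a i) - U n) \<union> (\<Union>i<n. (a i - F i) \<union> (F i - a i))"
      unfolding FF_def U_def by blast
    have m1: "measure \<nu> ((\<Union>i. a i) - U n) < e / 2"
    proof -
      have "U n \<subseteq> (\<Union>i. a i)" unfolding U_def by auto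
      then have "measure \<nu> ((\<Union>i. a i) - U n) = measure \<nu> (\<Union>i. a i) - measure \<nu> (U n)"
        using Us as by (intro finite_measure_Diff) auto
      then show ?thesis using n by simp
    qed
    have m2: "measure \<nu> (\<Union>i<n. (a i - F i) \<union> (F i - a i)) \<le> real n * (e / (2 * real (Suc n)))"
    proof -
      have "measure \<nu> (\<Union>i<n. (a i - F i) \<union> (F i - a i)) \<le> (\<Sum>i<n. measure \<nu> ((a i - F i) \<union> (F i - a i)))"
        using as Fs by (intro measure_UNION_le) auto
      also have "\<dots> \<le> (\<Sum>i<n. e / (2 * real (Suc n)))"
        using F(2) by (intro sum_mono less_imp_le) auto
      finally show ?thesis by simp
    qed
    have m3: "real n * (e / (2 * real (Suc n))) \<le> e / 2"
      using e by (simp add: field_simps)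
    have "measure \<nu> (((\<Union>i. a i) - FF) \<union> (FF - (\<Union>i. a i))) \<le> measure \<nu> (((\<Union>i. a i) - U n) \<union> (\<Union>i<n. (a i - F i) \<union> (F i - a i)))"
      using D as Fs Us by (intro finite_measure_mono) auto
    also have "\<dots> \<le> measure \<nu> ((\<Union>i. a i) - U n) + measure \<nu> (\<Union>i<n. (a i - F i) \<union> (F i - a i))"
      using as Fs Us by (intro measure_Un_le) auto
    also have "\<dots> < e" using m1 m2 m3 by linarith
    finally show "\<exists>F\<in>\<F>. measure \<nu> (((\<Union>i. a i) - F) \<union> (F - (\<Union>i. a i))) < e"
      using FFin by blast
  qed
qed

definition depE :: "nat \<Rightarrow> (int \<Rightarrow> real) set \<Rightarrow> bool" where
  "depE N S \<longleftrightarrow> (\<forall>f f'. (\<forall>t. \<bar>t\<bar> \<le> int N \<longrightarrow> f t = f' t) \<longrightarrow> (f \<in> S \<longleftrightarrow> f' \<in> S))"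

definition depP :: "nat \<Rightarrow> ((int \<Rightarrow> real) \<times> (int \<Rightarrow> real)) set \<Rightarrow> bool" where
  "depP N S \<longleftrightarrow> (\<forall>p q. (\<forall>t. \<bar>t\<bar> \<le> int N \<longrightarrow> fst p t = fst q t \<and> snd p t = snd q t) \<longrightarrow> (p \<in> S \<longleftrightarrow> q \<in> S))"

lemma depE_mono: "depE N S \<Longrightarrow> N \<le> N' \<Longrightarrow> depE N' S"
  unfolding depE_def by (meson of_nat_le_iff order_trans)

lemma depP_mono: "depP N S \<Longrightarrow> N \<le> N' \<Longrightarrow> depP N' S"
  unfolding depP_def by (meson of_nat_le_iff order_trans)

lemma sets_EE_sigma: "sets EE = sigma_sets UNIV (prod_algebra UNIV (\<lambda>_::int. borel::real measure))"
  by (simp add: sets_PiM PiE_UNIV_domain)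

lemma approx_EE:
  assumes fm: "finite_measure \<nu>" and sn: "sets \<nu> = sets EE" and S: "S \<in> sets EE" and e: "0 < e"
  shows "\<exists>F\<in>{F\<in>sets EE. \<exists>N. depE N F}. measure \<nu> ((S - F) \<union> (F - S)) < e"
proof -
  have sp: "space \<nu> = UNIV" using sets_eq_imp_space_eq[OF sn] by simp
  have "\<forall>e>0. \<exists>F\<in>{F\<in>sets EE. \<exists>N. depE N F}. measure \<nu> ((S - F) \<union> (F - S)) < e"
  proof (rule approx_sigma[OF fm _ _ sp])
    show "sets \<nu> = sigma_sets UNIV (prod_algebra UNIV (\<lambda>_::int. borel::real measure))"
      using sn sets_EE_sigma by simp
    show "prod_algebra UNIV (\<lambda>_::int. borel::real measure) \<subseteq> Pow UNIV" by simp
    show "{F \<in> sets EE. \<exists>N. depE N F} \<subseteq> sets \<nu>" using sn by auto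
    show "{} \<in> {F \<in> sets EE. \<exists>N. depE N F}" by (auto simp: depE_def)
    show "UNIV - A \<in> {F \<in> sets EE. \<exists>N. depE N F}" if h: "A \<in> {F \<in> sets EE. \<exists>N. depE N F}" for A
    proof -
      have "UNIV - A \<in> sets EE"
        using h sets.compl_sets[of A EE] by simp
      moreover obtain N where "depE N A" using h by auto
      then have "depE N (UNIV - A)" unfolding depE_def by blast
      ultimately show ?thesis by auto
    qed
    show "A \<union> B \<in> {F \<in> sets EE. \<exists>N. depE N F}"
      if h: "A \<in> {F \<in> sets EE. \<exists>N. depE N F}" "B \<in> {F \<in> sets EE. \<exists>N. depE N F}" for A B
    proof -
      obtain N1 N2 where "depE N1 A" "depE N2 B" using h by auto
      then have "depE (max N1 N2) A" "depE (max N1 N2) B" by (auto intro: depE_mono)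
      then have "depE (max N1 N2) (A \<union> B)" unfolding depE_def by blast
      then show ?thesis using h by auto
    qed
    show "\<exists>F\<in>{F \<in> sets EE. \<exists>N. depE N F}. measure \<nu> ((A - F) \<union> (F - A)) < e"
      if A: "A \<in> prod_algebra UNIV (\<lambda>_::int. borel::real measure)" and e: "0 < e" for A e
    proof -
      obtain J X where AJ: "A = prod_emb UNIV (\<lambda>_::int. borel::real measure) J (Pi\<^sub>E J X)" and J: "finite J"
        and X: "\<And>i. i \<in> J \<Longrightarrow> X i \<in> sets borel"
        using A by (elim prod_algebraE) auto
      define N where "N = nat (Max (insert 0 (abs ` J)))"
      have JN: "\<bar>j\<bar> \<le> int N" if "j \<in> J" for j
        using J that unfolding N_def by (auto intro: Max_ge)
      have "depE N A"
        unfolding depE_def AJ using JN by (auto simp: prod_emb_iff PiE_iff extensional_def)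
      moreover have "A \<in> sets EE" using A by (auto intro: sets_PiM_I_finite simp: AJ J X sets_PiM_I)
      ultimately show ?thesis using e by (intro bexI[of _ A]) auto
    qed
  qed (use S sets_EE_sigma in auto)
  then show ?thesis using e by blast
qed

context setting begin

lemma approx_P:
  assumes S: "S \<in> sets (EE \<Otimes>\<^sub>M EE)" and e: "0 < e"
  shows "\<exists>F\<in>{F\<in>sets (EE \<Otimes>\<^sub>M EE). \<exists>N. depP N F}. measure mu ((S - F) \<union> (F - S)) < e"
proof -
  interpret pe: prob_space lawe by (rule prob_lawe)
  interpret px: prob_space lawx by (rule prob_lawx)
  interpret pm: prob_space mu by (rule prob_mu)
  have sets_eq: "sets mu = sigma_sets UNIV {a \<times> b | a b. a \<in> sets EE \<and> b \<in> sets EE}"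
    by (simp add: sets_pair_measure)
  have "\<forall>e>0. \<exists>F\<in>{F\<in>sets (EE \<Otimes>\<^sub>M EE). \<exists>N. depP N F}. measure mu ((S - F) \<union> (F - S)) < e"
  proof (rule approx_sigma[OF pm.finite_measure_axioms sets_eq])
    show "{a \<times> b | a b. a \<in> sets EE \<and> b \<in> sets EE} \<subseteq> Pow UNIV" by simp
    show "space mu = UNIV" by simp
    show "{F \<in> sets (EE \<Otimes>\<^sub>M EE). \<exists>N. depP N F} \<subseteq> sets mu" by auto
    show "{} \<in> {F \<in> sets (EE \<Otimes>\<^sub>M EE). \<exists>N. depP N F}" by (auto simp: depP_def)
    show "UNIV - A \<in> {F \<in> sets (EE \<Otimes>\<^sub>M EE). \<exists>N. depP N F}" if h: "A \<in> {F \<in> sets (EE \<Otimes>\<^sub>M EE). \<exists>N. depP N F}" for A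
    proof -
      have "UNIV - A \<in> sets (EE \<Otimes>\<^sub>M EE)"
        using h sets.compl_sets[of A "EE \<Otimes>\<^sub>M EE"] by (simp add: space_pair_measure)
      moreover obtain N where "depP N A" using h by auto
      then have "depP N (UNIV - A)" unfolding depP_def by blast
      ultimately show ?thesis by auto
    qed
    show "A \<union> B \<in> {F \<in> sets (EE \<Otimes>\<^sub>M EE). \<exists>N. depP N F}"
      if h: "A \<in> {F \<in> sets (EE \<Otimes>\<^sub>M EE). \<exists>N. depP N F}" "B \<in> {F \<in> sets (EE \<Otimes>\<^sub>M EE). \<exists>N. depP N F}" for A B
    proof -
      obtain N1 N2 where "depP N1 A" "depP N2 B" using h by auto
      then have "depP (max N1 N2) A" "depP (max N1 N2) B" by (auto intro: depP_mono)
      then have "depP (max N1 N2) (A \<union> B)" unfolding depP_def by blast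
      then show ?thesis using h by auto
    qed
    show "\<exists>F\<in>{F \<in> sets (EE \<Otimes>\<^sub>M EE). \<exists>N. depP N F}. measure mu ((A - F) \<union> (F - A)) < e"
      if A: "A \<in> {a \<times> b | a b. a \<in> sets EE \<and> b \<in> sets EE}" and e: "0 < e" for A e
    proof -
      obtain a b where ab: "A = a \<times> b" "a \<in> sets EE" "b \<in> sets EE" using A by auto
      obtain F1 N1 where F1: "F1 \<in> sets EE" "depE N1 F1" "measure lawx ((a - F1) \<union> (F1 - a)) < e / 2"
        using approx_EE[OF px.finite_measure_axioms sets_lawx ab(2), of "e/2"] e by auto
      obtain F2 N2 where F2: "F2 \<in> sets EE" "depE N2 F2" "measure lawe ((b - F2) \<union> (F2 - b)) < e / 2"
        using approx_EE[OF pe.finite_measure_axioms sets_lawe ab(3), of "e/2"] e by auto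
      let ?N = "max N1 N2"
      have d1: "depE ?N F1" "depE ?N F2" using F1 F2 by (auto intro: depE_mono)
      have "depP ?N (F1 \<times> F2)"
        unfolding depP_def
      proof (intro allI impI)
        fix p q :: "(int \<Rightarrow> real) \<times> (int \<Rightarrow> real)"
        assume h: "\<forall>t. \<bar>t\<bar> \<le> int ?N \<longrightarrow> fst p t = fst q t \<and> snd p t = snd q t"
        have "fst p \<in> F1 \<longleftrightarrow> fst q \<in> F1" using d1(1) h unfolding depE_def by blast
        moreover have "snd p \<in> F2 \<longleftrightarrow> snd q \<in> F2" using d1(2) h unfolding depE_def by blast
        ultimately show "p \<in> F1 \<times> F2 \<longleftrightarrow> q \<in> F1 \<times> F2" by (cases p, cases q) auto
      qed
      moreover have F12: "F1 \<times> F2 \<in> sets (EE \<Otimes>\<^sub>M EE)" using F1 F2 by auto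
      moreover have "measure mu ((A - F1 \<times> F2) \<union> (F1 \<times> F2 - A)) < e"
      proof -
        let ?X = "(a - F1) \<union> (F1 - a)" and ?Y = "(b - F2) \<union> (F2 - b)"
        have Xs: "?X \<in> sets EE" "?Y \<in> sets EE" using ab F1 F2 by auto
        have XU: "?X \<times> UNIV \<in> sets (EE \<Otimes>\<^sub>M EE)" "UNIV \<times> ?Y \<in> sets (EE \<Otimes>\<^sub>M EE)"
          using Xs sets.top[of EE] by (auto intro!: pair_measureI)
        have sub: "(A - F1 \<times> F2) \<union> (F1 \<times> F2 - A) \<subseteq> ?X \<times> UNIV \<union> UNIV \<times> ?Y" using ab by auto
        have mX: "measure mu (?X \<times> UNIV) = measure lawx ?X"
        proof -
          have "emeasure mu (?X \<times> UNIV) = emeasure lawx ?X * emeasure lawe UNIV"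
            unfolding mu_eq using Xs sets.top[of EE] by (intro pe.emeasure_pair_measure_Times) auto
          then show ?thesis using pe.emeasure_space_1 by (simp add: measure_def)
        qed
        have mY: "measure mu (UNIV \<times> ?Y) = measure lawe ?Y"
        proof -
          have "emeasure mu (UNIV \<times> ?Y) = emeasure lawx UNIV * emeasure lawe ?Y"
            unfolding mu_eq using Xs sets.top[of EE] by (intro pe.emeasure_pair_measure_Times) auto
          then show ?thesis using px.emeasure_space_1 by (simp add: measure_def)
        qed
        have "measure mu ((A - F1 \<times> F2) \<union> (F1 \<times> F2 - A)) \<le> measure mu (?X \<times> UNIV \<union> UNIV \<times> ?Y)"
          using sub XU by (intro pm.finite_measure_mono) auto
        also have "\<dots> \<le> measure mu (?X \<times> UNIV) + measure mu (UNIV \<times> ?Y)"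
          using XU by (intro measure_Un_le) auto
        also have "\<dots> < e" using mX mY F1 F2 by simp
        finally show ?thesis .
      qed
      ultimately show ?thesis by blast
    qed
  qed (use S sets_eq in auto)
  then show ?thesis using e by blast
qed

end

definition depI :: "int set \<Rightarrow> (int \<Rightarrow> real) set \<Rightarrow> bool" where
  "depI I S \<longleftrightarrow> (\<forall>f f'. (\<forall>t\<in>I. f t = f' t) \<longrightarrow> (f \<in> S \<longleftrightarrow> f' \<in> S))"

definition ext0 :: "int set \<Rightarrow> (int \<Rightarrow> real) \<Rightarrow> (int \<Rightarrow> real)" where
  "ext0 I h = (\<lambda>s. if s \<in> I then h s else 0)"

lemma ext0_meas: "ext0 I \<in> measurable (PiM I (\<lambda>_. borel)) EE"
  unfolding ext0_def
proof (rule measurable_PiM_single')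
  fix s :: int
  show "(\<lambda>\<omega>. if s \<in> I then \<omega> s else 0) \<in> borel_measurable (PiM I (\<lambda>_. borel))"
    by (cases "s \<in> I") auto
qed (auto simp: space_PiM)

context setting begin

lemma lawe_event: "S \<in> sets EE \<Longrightarrow> measure lawe S = prob {\<omega>\<in>space M. path eps \<omega> \<in> S}"
  unfolding lawe_def by (subst measure_distr) (auto intro!: arg_cong[where f=prob])

lemma lawe_indep:
  assumes S1: "S1 \<in> sets EE" and S2: "S2 \<in> sets EE" and I: "I1 \<inter> I2 = {}"
    and d1: "depI I1 S1" and d2: "depI I2 S2"
  shows "measure lawe (S1 \<inter> S2) = measure lawe S1 * measure lawe S2"
proof -
  define Y1 where "Y1 \<omega> = restrict (\<lambda>i. eps i \<omega>) I1" for \<omega>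
  define Y2 where "Y2 \<omega> = restrict (\<lambda>i. eps i \<omega>) I2" for \<omega>
  have iv: "indep_var (PiM I1 (\<lambda>_. borel)) Y1 (PiM I2 (\<lambda>_. borel)) Y2"
    unfolding Y1_def Y2_def using I by (intro indep_var_restrict[OF eps_indep]) auto
  define X1 where "X1 = ext0 I1 -` S1 \<inter> space (PiM I1 (\<lambda>_. borel::real measure))"
  define X2 where "X2 = ext0 I2 -` S2 \<inter> space (PiM I2 (\<lambda>_. borel::real measure))"
  have X1s: "X1 \<in> sets (PiM I1 (\<lambda>_. borel))" unfolding X1_def by (rule measurable_sets[OF ext0_meas S1])
  have X2s: "X2 \<in> sets (PiM I2 (\<lambda>_. borel))" unfolding X2_def by (rule measurable_sets[OF ext0_meas S2])
  have Y1sp: "Y1 \<omega> \<in> space (PiM I1 (\<lambda>_. borel::real measure))" for \<omega> by (simp add: Y1_def space_PiM)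
  have Y2sp: "Y2 \<omega> \<in> space (PiM I2 (\<lambda>_. borel::real measure))" for \<omega> by (simp add: Y2_def space_PiM)
  have e1: "path eps \<omega> \<in> S1 \<longleftrightarrow> Y1 \<omega> \<in> X1" for \<omega>
  proof -
    have "path eps \<omega> \<in> S1 \<longleftrightarrow> ext0 I1 (Y1 \<omega>) \<in> S1"
    proof -
      have "\<forall>t\<in>I1. path eps \<omega> t = ext0 I1 (Y1 \<omega>) t" by (simp add: ext0_def Y1_def path_def)
      then show ?thesis using d1 unfolding depI_def by blast
    qed
    then show ?thesis using Y1sp by (simp add: X1_def)
  qed
  have e2: "path eps \<omega> \<in> S2 \<longleftrightarrow> Y2 \<omega> \<in> X2" for \<omega>
  proof -
    have "path eps \<omega> \<in> S2 \<longleftrightarrow> ext0 I2 (Y2 \<omega>) \<in> S2"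
    proof -
      have "\<forall>t\<in>I2. path eps \<omega> t = ext0 I2 (Y2 \<omega>) t" by (simp add: ext0_def Y2_def path_def)
      then show ?thesis using d2 unfolding depI_def by blast
    qed
    then show ?thesis using Y2sp by (simp add: X2_def)
  qed
  have "measure lawe (S1 \<inter> S2) = prob ((\<lambda>\<omega>. (Y1 \<omega>, Y2 \<omega>)) -` (X1 \<times> X2) \<inter> space M)"
    using S1 S2 e1 e2 by (subst lawe_event) (auto intro!: arg_cong[where f=prob])
  also have "\<dots> = prob (Y1 -` X1 \<inter> space M) * prob (Y2 -` X2 \<inter> space M)"
    by (rule indep_varD[OF iv X1s X2s])
  also have "prob (Y1 -` X1 \<inter> space M) = measure lawe S1"
    using S1 e1 by (subst lawe_event) (auto intro!: arg_cong[where f=prob])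
  also have "prob (Y2 -` X2 \<inter> space M) = measure lawe S2"
    using S2 e2 by (subst lawe_event) (auto intro!: arg_cong[where f=prob])
  finally show ?thesis .
qed

end

lemma (in finite_measure) measure_diff_le_symdiff:
  assumes A: "A \<in> sets M" and B: "B \<in> sets M"
  shows "\<bar>measure M A - measure M B\<bar> \<le> measure M ((A - B) \<union> (B - A))"
proof -
  have "measure M A \<le> measure M (B \<union> ((A - B) \<union> (B - A)))"
    using A B by (intro finite_measure_mono) auto
  also have "\<dots> \<le> measure M B + measure M ((A - B) \<union> (B - A))"
    using A B by (intro measure_Un_le) auto
  finally have 1: "measure M A \<le> measure M B + measure M ((A - B) \<union> (B - A))" .
  have "measure M B \<le> measure M (A \<union> ((A - B) \<union> (B - A)))"
    using A B by (intro finite_measure_mono) auto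
  also have "\<dots> \<le> measure M A + measure M ((A - B) \<union> (B - A))"
    using A B by (intro measure_Un_le) auto
  finally have 2: "measure M B \<le> measure M A + measure M ((A - B) \<union> (B - A))" .
  show ?thesis using 1 2 by linarith
qed

context setting begin

lemma Tsh_add: "Tsh (a + b) p = Tsh a (Tsh b p)"
  by (simp add: Tsh_def shf_def fun_eq_iff algebra_simps)

definition "psi S y = measure lawe (Pair y -` S)"

lemma psi_meas[measurable]: "S \<in> sets (EE \<Otimes>\<^sub>M EE) \<Longrightarrow> psi S \<in> borel_measurable EE"
proof -
  assume S: "S \<in> sets (EE \<Otimes>\<^sub>M EE)"
  interpret pe: prob_space lawe by (rule prob_lawe)
  have "S \<in> sets (EE \<Otimes>\<^sub>M lawe)" using S by simp
  then have "(\<lambda>y. emeasure lawe (Pair y -` S)) \<in> borel_measurable EE"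
    by (rule pe.measurable_emeasure_Pair)
  then have "(\<lambda>y. enn2real (emeasure lawe (Pair y -` S))) \<in> borel_measurable EE" by measurable
  then show ?thesis unfolding psi_def[abs_def] measure_def .
qed

lemma psi_bounds: "0 \<le> psi S y" "psi S y \<le> 1"
proof -
  interpret pe: prob_space lawe by (rule prob_lawe)
  show "0 \<le> psi S y" "psi S y \<le> 1" by (auto simp: psi_def)
qed

lemma psi_abs: "\<bar>psi S y\<bar> \<le> 1" using psi_bounds[of S y] by simp

lemma psi_int: "S \<in> sets (EE \<Otimes>\<^sub>M EE) \<Longrightarrow> integrable lawx (psi S)"
proof -
  assume S: "S \<in> sets (EE \<Otimes>\<^sub>M EE)"
  interpret px: prob_space lawx by (rule prob_lawx)
  show ?thesis
    by (rule px.integrable_const_bound[where B=1]) (use psi_abs S in \<open>auto intro!: AE_I2 simp: measurable_cong_sets[OF sets_lawx refl]\<close>)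
qed

lemma mu_sec: "S \<in> sets (EE \<Otimes>\<^sub>M EE) \<Longrightarrow> measure mu S = (\<integral>y. psi S y \<partial>lawx)"
proof -
  assume S: "S \<in> sets (EE \<Otimes>\<^sub>M EE)"
  interpret pe: prob_space lawe by (rule prob_lawe)
  interpret pm: prob_space mu by (rule prob_mu)
  have S': "S \<in> sets (lawx \<Otimes>\<^sub>M lawe)" using S by simp
  have "emeasure mu S = (\<integral>\<^sup>+y. emeasure lawe (Pair y -` S) \<partial>lawx)"
    unfolding mu_eq by (rule pe.emeasure_pair_measure_alt[OF S'])
  also have "\<dots> = (\<integral>\<^sup>+y. ennreal (psi S y) \<partial>lawx)"
    by (intro nn_integral_cong) (simp add: psi_def pe.emeasure_eq_measure)
  also have "\<dots> = ennreal (\<integral>y. psi S y \<partial>lawx)"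
    using psi_int[OF S] psi_bounds by (intro nn_integral_eq_integral AE_I2) auto
  finally have "ennreal (measure mu S) = ennreal (\<integral>y. psi S y \<partial>lawx)" using pm.emeasure_eq_measure by simp
  moreover have "0 \<le> (\<integral>y. psi S y \<partial>lawx)" by (intro integral_nonneg_AE AE_I2) (simp add: psi_bounds)
  ultimately show ?thesis by (simp add: ennreal_inj)
qed

lemma psi_diff: "S1 \<in> sets (EE \<Otimes>\<^sub>M EE) \<Longrightarrow> S2 \<in> sets (EE \<Otimes>\<^sub>M EE) \<Longrightarrow>
   \<bar>psi S1 y - psi S2 y\<bar> \<le> psi ((S1 - S2) \<union> (S2 - S1)) y"
proof -
  assume S: "S1 \<in> sets (EE \<Otimes>\<^sub>M EE)" "S2 \<in> sets (EE \<Otimes>\<^sub>M EE)"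
  interpret pe: prob_space lawe by (rule prob_lawe)
  have "Pair y -` ((S1 - S2) \<union> (S2 - S1)) = (Pair y -` S1 - Pair y -` S2) \<union> (Pair y -` S2 - Pair y -` S1)" by auto
  moreover have "Pair y -` S1 \<in> sets lawe" "Pair y -` S2 \<in> sets lawe"
    using sets_Pair1[OF S(1)] sets_Pair1[OF S(2)] by auto
  ultimately show ?thesis unfolding psi_def using pe.measure_diff_le_symdiff by simp
qed

lemma mu_Tsh_measure: "S \<in> sets (EE \<Otimes>\<^sub>M EE) \<Longrightarrow> measure mu (Tsh h -` S) = measure mu S"
proof -
  assume S: "S \<in> sets (EE \<Otimes>\<^sub>M EE)"
  have "measure mu S = measure (distr mu (EE \<Otimes>\<^sub>M EE) (Tsh h)) S" using mu_inv by simp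
  also have "\<dots> = measure mu (Tsh h -` S \<inter> space mu)"
    using S by (intro measure_distr) (auto simp: measurable_cong_sets[OF sets_mu refl])
  finally show ?thesis by simp
qed

lemma Tsh_inv_nat: assumes "Tsh 1 -` A = A" shows "Tsh (int n) -` A = A"
proof (induction n)
  case 0 then show ?case by (simp add: Tsh_def shf_def)
next
  case (Suc n)
  have e: "\<And>p. Tsh (1 + int n) p = Tsh (int n) (Tsh 1 p)" by (metis Tsh_add add.commute)
  have "Tsh (int (Suc n)) -` A = Tsh 1 -` (Tsh (int n) -` A)"
    by (auto simp: e)
  then show ?case using Suc assms by simp
qed

lemma psi_shift:
  assumes A: "A \<in> sets (EE \<Otimes>\<^sub>M EE)" and inv: "Tsh 1 -` A = A"
  shows "psi A (shf 1 y) = psi A y"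
proof -
  have sec: "Pair y -` A = shf 1 -` (Pair (shf 1 y) -` A)"
  proof -
    have "(y, f) \<in> A \<longleftrightarrow> (shf 1 y, shf 1 f) \<in> A" for f
      using inv by (metis Tsh_def fst_conv snd_conv vimage_eq)
    then show ?thesis by auto
  qed
  have "psi A y = measure lawe (shf 1 -` (Pair (shf 1 y) -` A) \<inter> space lawe)"
    using sec by (simp add: psi_def)
  also have "\<dots> = measure (distr lawe EE (shf 1)) (Pair (shf 1 y) -` A)"
    using sets_Pair1[OF A] by (intro measure_distr[symmetric]) (auto simp: measurable_cong_sets[OF sets_lawe refl])
  also have "\<dots> = psi A (shf 1 y)" using lawe_inv by (simp add: psi_def)
  finally show ?thesis ..
qed

end

context setting begin

lemma Tsh_sets: "B \<in> sets (EE \<Otimes>\<^sub>M EE) \<Longrightarrow> Tsh h -` B \<in> sets (EE \<Otimes>\<^sub>M EE)"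
  using measurable_sets[OF Tsh_meas, of B h] by (simp add: space_pair_measure)

lemma psi_prod:
  assumes B: "B \<in> sets (EE \<Otimes>\<^sub>M EE)" and d: "depP N B"
  shows "psi (B \<inter> Tsh (2 * int N + 1) -` B) y = psi B y * psi (Tsh (2 * int N + 1) -` B) y"
proof -
  define n where "n = 2 * int N + 1"
  define I1 where "I1 = {- int N .. int N}"
  define I2 where "I2 = {int N + 1 .. 3 * int N + 1}"
  have B': "Tsh n -` B \<in> sets (EE \<Otimes>\<^sub>M EE)" by (rule Tsh_sets[OF B])
  have S1: "Pair y -` B \<in> sets EE" using sets_Pair1[OF B] .
  have S2: "Pair y -` (Tsh n -` B) \<in> sets EE" using sets_Pair1[OF B'] .
  have d1: "depI I1 (Pair y -` B)"
    unfolding depI_def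
  proof (intro allI impI)
    fix f f' :: "int \<Rightarrow> real" assume h: "\<forall>t\<in>I1. f t = f' t"
    have "\<forall>t. \<bar>t\<bar> \<le> int N \<longrightarrow> fst (y, f) t = fst (y, f') t \<and> snd (y, f) t = snd (y, f') t"
      using h by (auto simp: I1_def abs_le_iff)
    then show "f \<in> Pair y -` B \<longleftrightarrow> f' \<in> Pair y -` B" using d unfolding depP_def by blast
  qed
  have d2: "depI I2 (Pair y -` (Tsh n -` B))"
    unfolding depI_def
  proof (intro allI impI)
    fix f f' :: "int \<Rightarrow> real" assume h: "\<forall>t\<in>I2. f t = f' t"
    have "\<forall>t. \<bar>t\<bar> \<le> int N \<longrightarrow> fst (Tsh n (y, f)) t = fst (Tsh n (y, f')) t \<and> snd (Tsh n (y, f)) t = snd (Tsh n (y, f')) t"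
    proof -
      have "\<forall>t. \<bar>t\<bar> \<le> int N \<longrightarrow> t + n \<in> I2" by (auto simp: I2_def n_def abs_le_iff)
      then show ?thesis using h by (auto simp: Tsh_def shf_def)
    qed
    then have "Tsh n (y, f) \<in> B \<longleftrightarrow> Tsh n (y, f') \<in> B" using d unfolding depP_def by blast
    then show "f \<in> Pair y -` (Tsh n -` B) \<longleftrightarrow> f' \<in> Pair y -` (Tsh n -` B)" by simp
  qed
  have I: "I1 \<inter> I2 = {}" by (auto simp: I1_def I2_def)
  have "Pair y -` (B \<inter> Tsh n -` B) = Pair y -` B \<inter> Pair y -` (Tsh n -` B)" by auto
  then show ?thesis
    unfolding n_def[symmetric] psi_def using lawe_indep[OF S1 S2 I d1 d2] by simp
qed

lemma ergodic_mu:
  assumes A: "A \<in> sets (EE \<Otimes>\<^sub>M EE)" and inv: "Tsh 1 -` A = A"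
  shows "measure mu A = 0 \<or> measure mu A = 1"
proof -
  interpret px: prob_space lawx by (rule prob_lawx)
  interpret pm: prob_space mu by (rule prob_mu)
  have bint: "integrable lawx f" if "f \<in> borel_measurable EE" "\<And>y. \<bar>f y\<bar> \<le> K" for f :: "(int \<Rightarrow> real) \<Rightarrow> real" and K :: real
    by (rule px.integrable_const_bound[where B=K]) (use that in \<open>auto simp: measurable_cong_sets[OF sets_lawx refl]\<close>)
  have pint2: "integrable lawx (\<lambda>y. psi S1 y * psi S2 y)"
    if S: "S1 \<in> sets (EE \<Otimes>\<^sub>M EE)" "S2 \<in> sets (EE \<Otimes>\<^sub>M EE)" for S1 S2
  proof (rule bint[of _ 1])
    show "(\<lambda>y. psi S1 y * psi S2 y) \<in> borel_measurable EE" using S by measurable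
    fix y show "\<bar>psi S1 y * psi S2 y\<bar> \<le> 1"
      using psi_bounds[of S1 y] psi_bounds[of S2 y] unfolding abs_mult by (simp add: mult_le_one)
  qed
  define \<psi> where "\<psi> = psi A"
  have \<psi>m[measurable]: "\<psi> \<in> borel_measurable EE" unfolding \<psi>_def using A by simp
  define I where "I = (\<integral>y. \<psi> y * \<psi> y \<partial>lawx)"
  have key: "\<bar>measure mu A - I\<bar> \<le> 4 * e" if e: "0 < e" for e
  proof -
    obtain B N where B: "B \<in> sets (EE \<Otimes>\<^sub>M EE)" "depP N B" "measure mu ((A - B) \<union> (B - A)) < e"
      using approx_P[OF A e] by auto
    define n where "n = 2 * int N + 1"
    define B' where "B' = Tsh n -` B"
    have B's: "B' \<in> sets (EE \<Otimes>\<^sub>M EE)" unfolding B'_def by (rule Tsh_sets[OF B(1)])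
    have Ainv: "Tsh n -` A = A" unfolding n_def using Tsh_inv_nat[OF inv, of "2 * N + 1"] by (simp add: add.commute)
    have dAB: "(A - B) \<union> (B - A) \<in> sets (EE \<Otimes>\<^sub>M EE)" using A B by auto
    have dAB': "(A - B') \<union> (B' - A) \<in> sets (EE \<Otimes>\<^sub>M EE)" using A B's by auto
    have m': "measure mu ((A - B') \<union> (B' - A)) = measure mu ((A - B) \<union> (B - A))"
    proof -
      have "Tsh n -` ((A - B) \<union> (B - A)) = (A - B') \<union> (B' - A)"
        unfolding B'_def vimage_Un vimage_Diff Ainv ..
      then show ?thesis using mu_Tsh_measure[OF dAB, of n] by simp
    qed
    let ?d = "measure mu ((A - B) \<union> (B - A))"
    have BB: "B \<inter> B' \<in> sets (EE \<Otimes>\<^sub>M EE)" using B B's by auto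
    have c1: "\<bar>measure mu A - measure mu (B \<inter> B')\<bar> \<le> 2 * ?d"
    proof -
      have "\<bar>measure mu A - measure mu (B \<inter> B')\<bar> \<le> measure mu ((A - B \<inter> B') \<union> (B \<inter> B' - A))"
        using A BB by (intro pm.measure_diff_le_symdiff) auto
      also have "\<dots> \<le> measure mu (((A - B) \<union> (B - A)) \<union> ((A - B') \<union> (B' - A)))"
        using dAB dAB' by (intro pm.finite_measure_mono) auto
      also have "\<dots> \<le> ?d + measure mu ((A - B') \<union> (B' - A))"
        using dAB dAB' by (intro measure_Un_le) auto
      finally show ?thesis using m' by simp
    qed
    have c2: "measure mu (B \<inter> B') = (\<integral>y. psi B y * psi B' y \<partial>lawx)"
      using mu_sec[OF BB] psi_prod[OF B(1,2)] unfolding B'_def n_def by simp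
    have c3: "\<bar>I - (\<integral>y. psi B y * psi B' y \<partial>lawx)\<bar> \<le> 2 * ?d"
    proof -
      have pw: "\<bar>\<psi> y * \<psi> y - psi B y * psi B' y\<bar> \<le> psi ((A - B) \<union> (B - A)) y + psi ((A - B') \<union> (B' - A)) y" for y
      proof -
        have a: "\<bar>\<psi> y - psi B y\<bar> \<le> psi ((A - B) \<union> (B - A)) y" unfolding \<psi>_def by (rule psi_diff[OF A B(1)])
        have b: "\<bar>\<psi> y - psi B' y\<bar> \<le> psi ((A - B') \<union> (B' - A)) y" unfolding \<psi>_def by (rule psi_diff[OF A B's])
        have "\<psi> y * \<psi> y - psi B y * psi B' y = \<psi> y * (\<psi> y - psi B' y) + psi B' y * (\<psi> y - psi B y)"
          by (simp add: algebra_simps)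
        also have "\<bar>\<dots>\<bar> \<le> \<bar>\<psi> y - psi B' y\<bar> + \<bar>\<psi> y - psi B y\<bar>"
        proof -
          have "\<bar>\<psi> y * (\<psi> y - psi B' y)\<bar> \<le> \<bar>\<psi> y - psi B' y\<bar>"
            using psi_abs[of A y] unfolding \<psi>_def abs_mult by (simp add: mult_left_le_one_le)
          moreover have "\<bar>psi B' y * (\<psi> y - psi B y)\<bar> \<le> \<bar>\<psi> y - psi B y\<bar>"
            using psi_abs[of B' y] unfolding abs_mult by (simp add: mult_left_le_one_le)
          ultimately show ?thesis by (meson abs_triangle_ineq add_mono order_trans)
        qed
        finally show ?thesis using a b by linarith
      qed
      have i1: "integrable lawx (\<lambda>y. \<psi> y * \<psi> y - psi B y * psi B' y)"
      proof (rule bint[of _ 2])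
        show "(\<lambda>y. \<psi> y * \<psi> y - psi B y * psi B' y) \<in> borel_measurable EE" using B B's by measurable
        fix y
        have "0 \<le> \<psi> y * \<psi> y" "\<psi> y * \<psi> y \<le> 1" "0 \<le> psi B y * psi B' y" "psi B y * psi B' y \<le> 1"
          using psi_bounds[of A y] psi_bounds[of B y] psi_bounds[of B' y] unfolding \<psi>_def
          by (auto intro: mult_le_one)
        then show "\<bar>\<psi> y * \<psi> y - psi B y * psi B' y\<bar> \<le> 2" by linarith
      qed
      have i2: "integrable lawx (\<lambda>y. psi ((A - B) \<union> (B - A)) y + psi ((A - B') \<union> (B' - A)) y)"
        using psi_int[OF dAB] psi_int[OF dAB'] by auto
      have "I - (\<integral>y. psi B y * psi B' y \<partial>lawx) = (\<integral>y. \<psi> y * \<psi> y - psi B y * psi B' y \<partial>lawx)"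
        unfolding I_def
        by (subst Bochner_Integration.integral_diff) (use pint2 A B B's in \<open>auto simp: \<psi>_def\<close>)
      also have "\<bar>\<dots>\<bar> \<le> (\<integral>y. psi ((A - B) \<union> (B - A)) y + psi ((A - B') \<union> (B' - A)) y \<partial>lawx)"
      proof -
        have "(\<integral>y. \<psi> y * \<psi> y - psi B y * psi B' y \<partial>lawx) \<le> (\<integral>y. psi ((A - B) \<union> (B - A)) y + psi ((A - B') \<union> (B' - A)) y \<partial>lawx)"
          using pw by (intro integral_mono[OF i1 i2]) (simp add: abs_le_iff)
        moreover have "- (\<integral>y. \<psi> y * \<psi> y - psi B y * psi B' y \<partial>lawx) \<le> (\<integral>y. psi ((A - B) \<union> (B - A)) y + psi ((A - B') \<union> (B' - A)) y \<partial>lawx)"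
        proof -
          have "(\<integral>y. - (\<psi> y * \<psi> y - psi B y * psi B' y) \<partial>lawx) \<le> (\<integral>y. psi ((A - B) \<union> (B - A)) y + psi ((A - B') \<union> (B' - A)) y \<partial>lawx)"
          proof (rule integral_mono[OF _ i2])
            show "integrable lawx (\<lambda>y. - (\<psi> y * \<psi> y - psi B y * psi B' y))"
              using i1 by (rule integrable_minus)
            fix y show "- (\<psi> y * \<psi> y - psi B y * psi B' y) \<le> psi ((A - B) \<union> (B - A)) y + psi ((A - B') \<union> (B' - A)) y"
              using pw[of y] by (simp add: abs_le_iff)
          qed
          then show ?thesis unfolding Bochner_Integration.integral_minus .
        qed
        ultimately show ?thesis by linarith
      qed
      also have "\<dots> = measure mu ((A - B) \<union> (B - A)) + measure mu ((A - B') \<union> (B' - A))"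
        using psi_int[OF dAB] psi_int[OF dAB'] mu_sec[OF dAB] mu_sec[OF dAB'] by simp
      finally show ?thesis using m' by simp
    qed
    have "\<bar>measure mu A - I\<bar> \<le> 4 * ?d" using c1 c2 c3 by linarith
    then show ?thesis using B(3) by linarith
  qed
  have eqI: "measure mu A = I"
  proof -
    have "\<bar>measure mu A - I\<bar> \<le> 0"
    proof (rule field_le_epsilon)
      fix e :: real assume "0 < e"
      then show "\<bar>measure mu A - I\<bar> \<le> 0 + e" using key[of "e / 4"] by simp
    qed
    then show ?thesis by simp
  qed
  have eqP: "measure mu A = (\<integral>y. \<psi> y \<partial>lawx)" unfolding \<psi>_def by (rule mu_sec[OF A])
  have ip: "integrable lawx \<psi>" unfolding \<psi>_def by (rule psi_int[OF A])
  have ipp: "integrable lawx (\<lambda>y. \<psi> y * \<psi> y)"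
  proof (rule bint[of _ 1])
    show "(\<lambda>y. \<psi> y * \<psi> y) \<in> borel_measurable EE" by measurable
    fix y show "\<bar>\<psi> y * \<psi> y\<bar> \<le> 1"
      using psi_bounds[of A y] unfolding \<psi>_def abs_mult by (simp add: mult_le_one)
  qed
  have "(\<integral>y. \<psi> y - \<psi> y * \<psi> y \<partial>lawx) = 0"
    using eqI eqP ip ipp by (simp add: I_def Bochner_Integration.integral_diff)
  moreover have "integrable lawx (\<lambda>y. \<psi> y - \<psi> y * \<psi> y)" using ip ipp by auto
  moreover have "AE y in lawx. 0 \<le> \<psi> y - \<psi> y * \<psi> y"
    using psi_bounds[of A] by (intro AE_I2) (simp add: \<psi>_def mult_left_le_one_le)
  ultimately have AE0: "AE y in lawx. \<psi> y - \<psi> y * \<psi> y = 0"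
    using integral_nonneg_eq_0_iff_AE by blast
  define C where "C = {y. \<psi> y = 1}"
  have Cs: "C \<in> sets EE"
  proof -
    have "{y \<in> space EE. \<psi> y = 1} \<in> sets EE" by measurable
    then show ?thesis by (simp add: C_def)
  qed
  have AEC: "AE y in lawx. \<psi> y = indicator C y"
    using AE0 by (rule eventually_mono) (auto simp: C_def indicator_def algebra_simps)
  have "measure mu A = (\<integral>y. indicator C y \<partial>lawx)"
    unfolding eqP by (rule integral_cong_AE) (use AEC Cs in \<open>auto simp: measurable_cong_sets[OF sets_lawx refl]\<close>)
  also have "\<dots> = measure lawx C" by simp
  also have "\<dots> = measure M (path x -` C \<inter> space M)"
    unfolding lawx_def using Cs by (intro measure_distr) auto
  finally have mC: "measure mu A = measure M (path x -` C \<inter> space M)" .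
  have Cinv: "(\<lambda>f t. f (t + 1)) -` C \<inter> space EE = C"
  proof -
    have "\<psi> (shf 1 y) = \<psi> y" for y unfolding \<psi>_def by (rule psi_shift[OF A inv])
    then show ?thesis by (auto simp: C_def shf_def[abs_def])
  qed
  have "measure M (path x -` C \<inter> space M) \<in> {0, 1}"
    using x_erg Cs Cinv unfolding ergodic_process_def by blast
  then show ?thesis using mC by auto
qed

end

lemma space_OUT[simp]: "space OUT = UNIV"
  by (simp add: space_PiM PiE_def extensional_def)

context setting begin

lemma RS_ergodic: "ergodic_process M borel (\<lambda>t \<omega>. (RR t \<omega>, sg t \<omega>))"
  unfolding ergodic_process_def
proof (intro conjI ballI impI)
  show "strictly_stationary M borel (\<lambda>t \<omega>. (RR t \<omega>, sg t \<omega>))" by (rule RS_stationary)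
  fix A assume A: "A \<in> sets OUT" and inv: "(\<lambda>f t. f (t + 1)) -` A \<inter> space OUT = A"
  define A' where "A' = Phi -` A"
  have A's: "A' \<in> sets (EE \<Otimes>\<^sub>M EE)"
    using measurable_sets[OF Phi_meas A] by (simp add: A'_def space_pair_measure)
  have inv': "Tsh 1 -` A' = A'"
  proof -
    have "Phi (Tsh 1 p) \<in> A \<longleftrightarrow> Phi p \<in> A" for p
    proof -
      have "Phi (Tsh 1 p) = (\<lambda>t. Phi p (t + 1))" by (simp add: Phi_shift shf_def)
      moreover have "(\<lambda>t. Phi p (t + 1)) \<in> A \<longleftrightarrow> Phi p \<in> A"
        using arg_cong[OF inv, of "\<lambda>S. Phi p \<in> S"] by simp
      ultimately show ?thesis by simp
    qed
    then show ?thesis unfolding A'_def vimage_def by simp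
  qed
  have "measure M (path (\<lambda>t \<omega>. (RR t \<omega>, sg t \<omega>)) -` A \<inter> space M)
      = measure M ((\<lambda>\<omega>. (path x \<omega>, path eps \<omega>)) -` A' \<inter> space M)"
    by (simp add: path_RS A'_def vimage_def)
  also have "\<dots> = measure mu A'"
    unfolding mu_def using A's by (intro measure_distr[symmetric]) auto
  finally show "measure M (path (\<lambda>t \<omega>. (RR t \<omega>, sg t \<omega>)) -` A \<inter> space M) \<in> {0, 1}"
    using ergodic_mu[OF A's inv'] by auto
qed

end

theorem proposition3p1:
  fixes M :: "'a measure"
    and \<delta> \<alpha> :: real
    and g u c :: "real \<Rightarrow> real"
    and eps x :: "int \<Rightarrow> 'a \<Rightarrow> real"
    and F :: "int \<Rightarrow> 'a measure"
  assumes P: "prob_space M"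
    and delta_pos: "\<delta> > 0"
    and g_cont: "continuous_on UNIV g" and g_nonneg: "\<forall>y. g y \<ge> 0"
    and u_cont: "continuous_on UNIV u" and u_nonneg: "\<forall>y. u y \<ge> 0"
    and c_cont: "continuous_on UNIV c" and c_nonneg: "\<forall>y. c y \<ge> 0"
    \<comment> \<open>eps i.i.d. with mean 0 and variance 1\<close>
    and eps_meas: "\<forall>t. eps t \<in> borel_measurable M"
    and eps_indep: "prob_space.indep_vars M (\<lambda>_. borel) eps UNIV"
    and eps_ident: "\<forall>t. distr M borel (eps t) = distr M borel (eps 0)"
    and eps_L2: "\<forall>t. integrable M (\<lambda>\<omega>. (eps t \<omega>)\<^sup>2)"
    and eps_mean: "\<forall>t. integrable M (eps t) \<and> integral\<^sup>L M (eps t) = 0"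
    and eps_var: "\<forall>t. integral\<^sup>L M (\<lambda>\<omega>. (eps t \<omega>)\<^sup>2) = 1"
    \<comment> \<open>x strictly stationary ergodic, independent of eps\<close>
    and x_erg: "ergodic_process M borel x"
    and x_eps_indep: "prob_space.indep_var M
          (PiM UNIV (\<lambda>_. borel)) (path x) (PiM UNIV (\<lambda>_. borel)) (path eps)"
    \<comment> \<open>(eps_t, x_t) adapted to the filtration F\<close>
    and F_sub: "\<forall>t. subalgebra M (F t)"
    and F_mono: "\<forall>s t. s \<le> t \<longrightarrow> sets (F s) \<subseteq> sets (F t)"
    and adapted: "\<forall>t. eps t \<in> borel_measurable (F t) \<and> x t \<in> borel_measurable (F t)"
    \<comment> \<open>moment conditions\<close>
    and alpha: "0 < \<alpha>" "\<alpha> \<le> 1"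
    and mom_eps: "\<forall>t. integrable M (\<lambda>\<omega>. \<bar>eps t \<omega>\<bar> powr (\<delta> * \<alpha>))"
    and mom_u: "\<forall>t. integrable M (\<lambda>\<omega>. u (x t \<omega>) powr \<alpha>)"
    and mom_c: "\<forall>t. integrable M (\<lambda>\<omega>. c (eps t \<omega>) powr \<alpha>) \<and>
                    integral\<^sup>L M (\<lambda>\<omega>. c (eps t \<omega>) powr \<alpha>) < 1"
    and mom_g: "\<forall>t. integrable M (\<lambda>\<omega>. g (eps t \<omega>) powr \<alpha>)"
  shows "\<exists>R \<sigma>.
      stationary_solution_of_order M (\<alpha> * \<delta>) \<delta> g u c eps x R \<sigma> \<and>
      (\<forall>R' \<sigma>'. stationary_solution_of_order M (\<alpha> * \<delta>) \<delta> g u c eps x R' \<sigma>' \<longrightarrow>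
          (\<forall>t. AE \<omega> in M. R' t \<omega> = R t \<omega> \<and> \<sigma>' t \<omega> = \<sigma> t \<omega>)) \<and>
      strictly_stationary M borel (\<lambda>t \<omega>. (R t \<omega>, \<sigma> t \<omega>)) \<and>
      ergodic_process M borel (\<lambda>t \<omega>. (R t \<omega>, \<sigma> t \<omega>)) \<and>
      (\<forall>t. AE \<omega> in M.
          R t \<omega> = \<sigma> t \<omega> * eps t \<omega> \<and>
          summable (\<lambda>k. causal_term g u c eps x t (Suc k) \<omega>) \<and>
          \<sigma> t \<omega> powr \<delta> = g (eps (t - 1) \<omega>) + u (x (t - 1) \<omega>)
              + (\<Sum>k. causal_term g u c eps x t (Suc k) \<omega>))"
proof -
  interpret S: setting M \<delta> \<alpha> g u c eps x
    by (rule setting.intro[OF P]) (unfold_locales; fact)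
  show ?thesis
    by (intro exI[of _ S.RR] exI[of _ S.sg] conjI allI impI S.stat_sol S.RS_stationary S.RS_ergodic S.causal_rep)
       (rule S.unique)
qed

end
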